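(* Let $\mu$ be a computable measure. The set of $\mu$-nilpotent cellular automata is $\Pi_3^0$.
   Context: A CA $F$ over finite alphabet $Q$ has radius $r$, local rule $\delta:Q^{2r+1}\to Q$, global map $F(c)_z=\delta(c_{z-r},\dots,c_{z+r})$. $\mu$ is a shift-invariant Borel probability measure on the configuration space of the CA considered; it is computable if there is a computable $f$ with $|\mu([u]_0)-f(u,\epsilon)|\le\epsilon$ for all words $u$ and rational $\epsilon>0$, where $[u]_0=\{c:c_{[0,|u|-1]}=u\}$. $L_\mu(F)=\{u:\mu(F^{-t}([u]_0))\not\to0\}$. $F$ is $\mu$-nilpotent if $L_\mu(F)=a^*$ for some state $a$ (equivalently its $\mu$-limit set is $\{a^{\mathbb{Z}}\}$). *)

theory Defs
  imports "HOL-Probability.Probability" "HOL-Library.Nat_Bijection"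
begin

datatype rf = Zr | Sc | Proj nat | Comp rf "rf list" | Prim rf rf | Mn rf

inductive rf_eval :: "rf \<Rightarrow> nat list \<Rightarrow> nat \<Rightarrow> bool" where
  zr: "rf_eval Zr xs 0"
| sc: "rf_eval Sc (x # xs) (Suc x)"
| proj: "i < length xs \<Longrightarrow> rf_eval (Proj i) xs (xs ! i)"
| comp: "length ys = length fs \<Longrightarrow> (\<forall>i < length fs. rf_eval (fs ! i) xs (ys ! i))
          \<Longrightarrow> rf_eval g ys y \<Longrightarrow> rf_eval (Comp g fs) xs y"
| prim0: "rf_eval f xs y \<Longrightarrow> rf_eval (Prim f g) (0 # xs) y"
| primS: "rf_eval (Prim f g) (n # xs) y \<Longrightarrow> rf_eval g (n # y # xs) z
          \<Longrightarrow> rf_eval (Prim f g) (Suc n # xs) z"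
| mn: "rf_eval f (n # xs) 0 \<Longrightarrow> (\<forall>m < n. \<exists>k. rf_eval f (m # xs) (Suc k))
          \<Longrightarrow> rf_eval (Mn f) xs n"

definition computable :: "(nat \<Rightarrow> nat) \<Rightarrow> bool" where
  "computable f \<longleftrightarrow> (\<exists>p. \<forall>n. rf_eval p [n] (f n))"

definition decidable4 :: "(nat \<Rightarrow> nat \<Rightarrow> nat \<Rightarrow> nat \<Rightarrow> bool) \<Rightarrow> bool" where
  "decidable4 R \<longleftrightarrow> computable (\<lambda>k. case prod_decode k of (n, k1) \<Rightarrow>
      (case prod_decode k1 of (a, k2) \<Rightarrow> (case prod_decode k2 of (b, c) \<Rightarrow>
         (if R n a b c then 1 else 0))))"

definition Pi3 :: "nat set \<Rightarrow> bool" where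
  "Pi3 A \<longleftrightarrow> (\<exists>R. decidable4 R \<and> (\<forall>n. n \<in> A \<longleftrightarrow> (\<forall>a. \<exists>b. \<forall>c. R n a b c)))"

definition rat_dec :: "nat \<Rightarrow> real" where
  "rat_dec k = (case prod_decode k of (a, b) \<Rightarrow> real_of_int (int_decode a) / real (b + 1))"

definition words :: "nat \<Rightarrow> nat list set" where
  "words q = {u. \<forall>x \<in> set u. x < q}"

definition configs :: "nat \<Rightarrow> (int \<Rightarrow> nat) set" where
  "configs q = {c. \<forall>z. c z < q}"

definition cyl :: "nat \<Rightarrow> nat list \<Rightarrow> int \<Rightarrow> (int \<Rightarrow> nat) set" where
  "cyl q u k = {c \<in> configs q. \<forall>i < length u. c (k + int i) = u ! i}"

text \<open>Borel sigma-algebra of the product topology on Q^Z = sigma-algebra generated by cylinders.\<close>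
definition config_space :: "nat \<Rightarrow> (int \<Rightarrow> nat) measure" where
  "config_space q = sigma (configs q) {cyl q u k | u k. u \<in> words q}"

definition shift :: "(int \<Rightarrow> nat) \<Rightarrow> (int \<Rightarrow> nat)" where
  "shift c = (\<lambda>z. c (z + 1))"

definition shift_invariant_prob :: "nat \<Rightarrow> (int \<Rightarrow> nat) measure \<Rightarrow> bool" where
  "shift_invariant_prob q \<mu> \<longleftrightarrow> sets \<mu> = sets (config_space q) \<and> prob_space \<mu> \<and>
     (\<forall>A \<in> sets \<mu>. measure \<mu> (shift -` A \<inter> space \<mu>) = measure \<mu> A)"

definition computable_measure :: "nat \<Rightarrow> (int \<Rightarrow> nat) measure \<Rightarrow> bool" where
  "computable_measure q \<mu> \<longleftrightarrow> (\<exists>f. computable f \<and>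
     (\<forall>n m. list_decode n \<in> words q \<longrightarrow> rat_dec m > 0 \<longrightarrow>
        \<bar>measure \<mu> (cyl q (list_decode n) 0) - rat_dec (f (prod_encode (n, m)))\<bar> \<le> rat_dec m))"

definition word_index :: "nat \<Rightarrow> nat list \<Rightarrow> nat" where
  "word_index q w = foldl (\<lambda>acc a. acc * q + a) 0 w"

text \<open>A natural number n codes the CA with radius r and rule table t, where (r, m) = prod_decode n
  and t = list_decode m lists delta(w) for all w in Q^(2r+1) in lexicographic order.\<close>
definition ca_radius :: "nat \<Rightarrow> nat" where
  "ca_radius n = fst (prod_decode n)"

definition ca_table :: "nat \<Rightarrow> nat list" where
  "ca_table n = list_decode (snd (prod_decode n))"

definition valid_ca :: "nat \<Rightarrow> nat \<Rightarrow> bool" where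
  "valid_ca q n \<longleftrightarrow> length (ca_table n) = q ^ (2 * ca_radius n + 1) \<and> ca_table n \<in> words q"

definition local_rule :: "nat \<Rightarrow> nat \<Rightarrow> nat list \<Rightarrow> nat" where
  "local_rule q n w = ca_table n ! word_index q w"

definition global_map :: "nat \<Rightarrow> nat \<Rightarrow> (int \<Rightarrow> nat) \<Rightarrow> (int \<Rightarrow> nat)" where
  "global_map q n c = (\<lambda>z. local_rule q n
      (map (\<lambda>i. c (z + i)) [- int (ca_radius n) .. int (ca_radius n)]))"

definition L_mu :: "nat \<Rightarrow> (int \<Rightarrow> nat) measure \<Rightarrow> nat \<Rightarrow> nat list set" where
  "L_mu q \<mu> n = {u \<in> words q. \<not> ((\<lambda>t. measure \<mu> ((global_map q n ^^ t) -` cyl q u 0 \<inter> space \<mu>))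
                                     \<longlonglongrightarrow> 0)}"

definition mu_nilpotent :: "nat \<Rightarrow> (int \<Rightarrow> nat) measure \<Rightarrow> nat \<Rightarrow> bool" where
  "mu_nilpotent q \<mu> n \<longleftrightarrow> (\<exists>a < q. L_mu q \<mu> n = {replicate k a | k. True})"

end

theory Submission
  imports Defs
begin

definition cmp :: "nat \<Rightarrow> (nat list \<Rightarrow> nat) \<Rightarrow> bool" where
  "cmp k f \<longleftrightarrow> (\<exists>p. \<forall>xs. length xs = k \<longrightarrow> rf_eval p xs (f xs))"

lemma cmp_cong: "cmp k f \<Longrightarrow> (\<And>xs. length xs = k \<Longrightarrow> f xs = g xs) \<Longrightarrow> cmp k g"
  unfolding cmp_def by metis

lemma cmp_zero: "cmp k (\<lambda>_. 0)"
  unfolding cmp_def by (auto intro: rf_eval.zr)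

lemma cmp_proj: "i < k \<Longrightarrow> cmp k (\<lambda>xs. xs ! i)"
  unfolding cmp_def by (auto intro: rf_eval.proj)

lemma progs_exist:
  assumes "\<forall>f\<in>set fs. cmp k f"
  shows "\<exists>ps. length ps = length fs \<and> (\<forall>i<length fs. \<forall>xs. length xs = k \<longrightarrow> rf_eval (ps!i) xs ((fs!i) xs))"
  using assms
proof (induction fs)
  case Nil then show ?case by auto
next
  case (Cons f fs)
  then obtain ps where ps: "length ps = length fs" "\<forall>i<length fs. \<forall>xs. length xs = k \<longrightarrow> rf_eval (ps!i) xs ((fs!i) xs)"
    by auto
  from Cons.prems obtain p where p: "\<forall>xs. length xs = k \<longrightarrow> rf_eval p xs (f xs)" unfolding cmp_def by auto
  show ?case
    apply (rule exI[of _ "p # ps"])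
    using ps p by (auto simp: nth_Cons split: nat.splits)
qed

lemma cmp_comp:
  assumes "cmp m g" "length fs = m" "\<forall>f\<in>set fs. cmp k f"
  shows "cmp k (\<lambda>xs. g (map (\<lambda>f. f xs) fs))"
proof -
  obtain pg where pg: "\<forall>ys. length ys = m \<longrightarrow> rf_eval pg ys (g ys)" using assms(1) unfolding cmp_def by auto
  obtain ps where ps: "length ps = length fs" "\<forall>i<length fs. \<forall>xs. length xs = k \<longrightarrow> rf_eval (ps!i) xs ((fs!i) xs)"
    using progs_exist[OF assms(3)] by auto
  show ?thesis unfolding cmp_def
  proof (rule exI[of _ "Comp pg ps"], intro allI impI)
    fix xs :: "nat list" assume "length xs = k"
    then show "rf_eval (Comp pg ps) xs (g (map (\<lambda>f. f xs) fs))"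
      using ps pg assms(2) by (intro rf_eval.comp[where ys="map (\<lambda>f. f xs) fs"]) auto
  qed
qed

lemma cmp_comp1: "cmp 1 g \<Longrightarrow> cmp k f \<Longrightarrow> cmp k (\<lambda>xs. g [f xs])"
  using cmp_comp[of 1 g "[f]" k] by simp

lemma cmp_comp2: "cmp 2 g \<Longrightarrow> cmp k f1 \<Longrightarrow> cmp k f2 \<Longrightarrow> cmp k (\<lambda>xs. g [f1 xs, f2 xs])"
  using cmp_comp[of 2 g "[f1,f2]" k] by simp

lemma cmp_comp3: "cmp 3 g \<Longrightarrow> cmp k f1 \<Longrightarrow> cmp k f2 \<Longrightarrow> cmp k f3 \<Longrightarrow> cmp k (\<lambda>xs. g [f1 xs, f2 xs, f3 xs])"
  using cmp_comp[of 3 g "[f1,f2,f3]" k] by (simp add: numeral_3_eq_3)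

lemma cmp_Suc_base: "cmp 1 (\<lambda>xs. Suc (xs!0))"
  unfolding cmp_def
  by (rule exI[of _ Sc]) (auto simp: length_Suc_conv intro: rf_eval.sc)

lemma cmp_Suc: "cmp k f \<Longrightarrow> cmp k (\<lambda>xs. Suc (f xs))"
  using cmp_comp1[OF cmp_Suc_base] by simp

lemma cmp_prim:
  assumes "cmp k F" "cmp (Suc (Suc k)) G"
  shows "cmp (Suc k) (\<lambda>ys. rec_nat (F (tl ys)) (\<lambda>n acc. G (n # acc # tl ys)) (hd ys))"
proof -
  obtain pf where pf: "\<forall>xs. length xs = k \<longrightarrow> rf_eval pf xs (F xs)" using assms(1) unfolding cmp_def by auto
  obtain pg where pg: "\<forall>xs. length xs = Suc (Suc k) \<longrightarrow> rf_eval pg xs (G xs)" using assms(2) unfolding cmp_def by auto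
  have *: "length xs = k \<Longrightarrow> rf_eval (Prim pf pg) (n # xs) (rec_nat (F xs) (\<lambda>n acc. G (n # acc # xs)) n)" for n xs
  proof (induction n)
    case 0 then show ?case using pf by (auto intro: rf_eval.prim0)
  next
    case (Suc n) then show ?case using pg by (auto intro: rf_eval.primS)
  qed
  show ?thesis unfolding cmp_def
    apply (rule exI[of _ "Prim pf pg"])
    using * by (auto simp: length_Suc_conv)
qed

lemma cmp_mn:
  assumes "cmp (Suc k) f" "\<And>xs. length xs = k \<Longrightarrow> \<exists>n. f (n # xs) = 0"
  shows "cmp k (\<lambda>xs. LEAST n. f (n # xs) = 0)"
proof -
  obtain p where p: "\<forall>xs. length xs = Suc k \<longrightarrow> rf_eval p xs (f xs)" using assms(1) unfolding cmp_def by auto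
  show ?thesis unfolding cmp_def
  proof (rule exI[of _ "Mn p"], intro allI impI)
    fix xs :: "nat list" assume l: "length xs = k"
    define n where "n = (LEAST n. f (n # xs) = 0)"
    obtain n0 where n0: "f (n0 # xs) = 0" using assms(2)[OF l] by blast
    have z: "f (n # xs) = 0" unfolding n_def by (rule LeastI[of _ n0]) (rule n0)
    have nz: "\<forall>m < n. \<exists>j. rf_eval p (m # xs) (Suc j)"
    proof (intro allI impI)
      fix m assume "m < n"
      then have "f (m # xs) \<noteq> 0" unfolding n_def by (rule not_less_Least)
      then obtain j where j: "f (m # xs) = Suc j" using not0_implies_Suc by blast
      have "rf_eval p (m # xs) (f (m # xs))" using p l by simp
      then show "\<exists>j. rf_eval p (m # xs) (Suc j)" unfolding j by blast
    qed
    have "rf_eval p (n # xs) (f (n # xs))" using p l by simp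
    then have "rf_eval p (n # xs) 0" unfolding z .
    then have "rf_eval (Mn p) xs n" using nz by (rule rf_eval.mn)
    then show "rf_eval (Mn p) xs (LEAST n. f (n # xs) = 0)" unfolding n_def .
  qed
qed

lemma cmp_args: "cmp k (\<lambda>xs. g xs) \<Longrightarrow> cmp k g" by simp

lemma map_proj: "length xs = k \<Longrightarrow> map (\<lambda>i. xs ! i) [0..<k] = xs"
  by (auto intro: nth_equalityI)

lemma cmp_extend:
  assumes "cmp (Suc k) g" "cmp k e"
  shows "cmp k (\<lambda>xs. g (e xs # xs))"
proof -
  have "cmp k (\<lambda>xs. g (map (\<lambda>f. f xs) (e # map (\<lambda>i xs. xs ! i) [0..<k])))"
    using assms by (intro cmp_comp) (auto intro: cmp_proj)
  then show ?thesis by (rule cmp_cong) (simp add: o_def map_proj)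
qed

lemma cmp_rec:
  assumes "cmp k f" "cmp k e" "cmp (Suc (Suc k)) (\<lambda>ws. G (ws!0) (ws!1) (drop 2 ws))"
  shows "cmp k (\<lambda>xs. rec_nat (f xs) (\<lambda>n acc. G n acc xs) (e xs))"
proof -
  have "cmp (Suc k) (\<lambda>ys. rec_nat (f (tl ys)) (\<lambda>n acc. (\<lambda>ws. G (ws!0) (ws!1) (drop 2 ws)) (n # acc # tl ys)) (hd ys))"
    by (rule cmp_prim[OF assms(1) assms(3)])
  then have "cmp k (\<lambda>xs. (\<lambda>ys. rec_nat (f (tl ys)) (\<lambda>n acc. (\<lambda>ws. G (ws!0) (ws!1) (drop 2 ws)) (n # acc # tl ys)) (hd ys)) (e xs # xs))"
    using assms(2) by (rule cmp_extend)
  then show ?thesis by simp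
qed

lemma cmp_mn':
  assumes "cmp (Suc k) (\<lambda>ys. f (hd ys) (tl ys))" "\<And>xs. length xs = k \<Longrightarrow> \<exists>n. f n xs = 0"
  shows "cmp k (\<lambda>xs. LEAST n. f n xs = 0)"
  using cmp_mn[OF assms(1)] assms(2) by simp

lemma cmp_un: "cmp 1 (\<lambda>ys. h (ys!0)) \<Longrightarrow> cmp k f \<Longrightarrow> cmp k (\<lambda>xs. h (f xs))"
  using cmp_comp1[of "\<lambda>ys. h (ys!0)" k f] by simp

lemma cmp_bin: "cmp 2 (\<lambda>ys. h (ys!0) (ys!1)) \<Longrightarrow> cmp k f \<Longrightarrow> cmp k g \<Longrightarrow> cmp k (\<lambda>xs. h (f xs) (g xs))"
  using cmp_comp2[of "\<lambda>ys. h (ys!0) (ys!1)" k f g] by simp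

lemma cmp_rec':
  assumes "cmp k f" "cmp k e" "cmp (Suc (Suc k)) H"
    "\<And>ws. length ws = Suc (Suc k) \<Longrightarrow> H ws = G (ws!0) (ws!1) (drop 2 ws)"
    "\<And>xs. length xs = k \<Longrightarrow> rec_nat (f xs) (\<lambda>n acc. G n acc xs) (e xs) = h xs"
  shows "cmp k h"
proof -
  have "cmp (Suc (Suc k)) (\<lambda>ws. G (ws!0) (ws!1) (drop 2 ws))"
    using assms(3) by (rule cmp_cong) (simp add: assms(4))
  from cmp_rec[OF assms(1,2) this] show ?thesis by (rule cmp_cong) (simp add: assms(5))
qed

lemma cmp_hd: "cmp (Suc k) hd"
  by (rule cmp_cong[OF cmp_proj[of 0]]) (simp, metis hd_conv_nth list.size(3) nat.distinct(1))

lemma rec_add: "rec_nat b (\<lambda>_ acc. Suc acc) a = a + b" by (induction a) auto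

lemma cmp_add2: "cmp 2 (\<lambda>ys. ys!0 + ys!1)"
  by (rule cmp_rec'[where f="\<lambda>xs. xs!1" and e="\<lambda>xs. xs!0" and G="\<lambda>n acc xs. Suc acc"
         and H="\<lambda>ws. Suc (ws!1)"])
     (auto intro!: cmp_proj cmp_Suc simp: rec_add)

lemma cmp_add: "cmp k f \<Longrightarrow> cmp k g \<Longrightarrow> cmp k (\<lambda>xs. f xs + g xs)"
  by (rule cmp_bin[OF cmp_add2])

lemma rec_mult: "rec_nat 0 (\<lambda>_ acc. acc + b) a = a * b" by (induction a) auto

lemma cmp_mult2: "cmp 2 (\<lambda>ys. ys!0 * ys!1)"
  by (rule cmp_rec'[where f="\<lambda>xs. 0" and e="\<lambda>xs. xs!0" and G="\<lambda>n acc xs. acc + xs!1"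
        and H="\<lambda>ws. ws!1 + ws!3"])
     (auto intro!: cmp_proj cmp_add cmp_zero simp: rec_mult nth_drop)

lemma cmp_mult: "cmp k f \<Longrightarrow> cmp k g \<Longrightarrow> cmp k (\<lambda>xs. f xs * g xs)"
  by (rule cmp_bin[OF cmp_mult2])

lemma rec_pred: "rec_nat 0 (\<lambda>n acc. n) a = a - 1" by (cases a) auto

lemma cmp_pred1: "cmp 1 (\<lambda>ys. ys!0 - 1)"
  by (rule cmp_rec'[where f="\<lambda>xs. 0" and e="\<lambda>xs. xs!0" and G="\<lambda>n acc xs. n" and H="\<lambda>ws. ws!0"])
     (auto intro!: cmp_proj cmp_zero simp: rec_pred)

lemma cmp_pred: "cmp k f \<Longrightarrow> cmp k (\<lambda>xs. f xs - 1)"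
  by (rule cmp_un[OF cmp_pred1])

lemma rec_minus: "rec_nat a (\<lambda>n acc. acc - 1) b = a - b" by (induction b) auto

lemma cmp_minus2: "cmp 2 (\<lambda>ys. ys!0 - ys!1)"
  by (rule cmp_rec'[where f="\<lambda>xs. xs!0" and e="\<lambda>xs. xs!1" and G="\<lambda>n acc xs. acc - 1"
        and H="\<lambda>ws. ws!1 - 1"])
     (auto intro!: cmp_proj cmp_pred simp: rec_minus simp del: One_nat_def)

lemma cmp_minus: "cmp k f \<Longrightarrow> cmp k g \<Longrightarrow> cmp k (\<lambda>xs. f xs - g xs)"
  by (rule cmp_bin[OF cmp_minus2])

lemma cmp_const: "cmp k (\<lambda>_. c)"
proof (induction c)
  case 0 then show ?case by (rule cmp_zero)
next
  case (Suc c) then show ?case using cmp_Suc[of k "\<lambda>_. c"] by simp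
qed

lemma rec_pow: "rec_nat 1 (\<lambda>_ acc. acc * a) b = (a::nat) ^ b" by (induction b) (auto simp: mult_ac)

lemma cmp_pow2: "cmp 2 (\<lambda>ys. ys!0 ^ ys!1)"
  by (rule cmp_rec'[where f="\<lambda>xs. 1" and e="\<lambda>xs. xs!1" and G="\<lambda>n acc xs. acc * xs!0"
        and H="\<lambda>ws. ws!1 * ws!2"])
     (auto intro!: cmp_proj cmp_mult cmp_const simp: rec_pow nth_drop simp del: One_nat_def)

lemma cmp_pow: "cmp k f \<Longrightarrow> cmp k g \<Longrightarrow> cmp k (\<lambda>xs. f xs ^ g xs)"
  by (rule cmp_bin[OF cmp_pow2])

definition cmpP :: "nat \<Rightarrow> (nat list \<Rightarrow> bool) \<Rightarrow> bool" where
  "cmpP k P \<longleftrightarrow> cmp k (\<lambda>xs. if P xs then 1 else 0)"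

lemma cmpP_le: assumes f: "cmp k f" and g: "cmp k g" shows "cmpP k (\<lambda>xs. f xs \<le> g xs)"
  unfolding cmpP_def
  by (rule cmp_cong[OF cmp_minus[OF cmp_const[of k 1] cmp_minus[OF f g]]]) auto

lemma cmpP_less: "cmp k f \<Longrightarrow> cmp k g \<Longrightarrow> cmpP k (\<lambda>xs. f xs < g xs)"
  using cmpP_le[of k "\<lambda>xs. Suc (f xs)" g] cmp_Suc[of k f] by (simp add: Suc_le_eq)

lemma cmpP_and: assumes P: "cmpP k P" and Q: "cmpP k Q" shows "cmpP k (\<lambda>xs. P xs \<and> Q xs)"
  using P Q unfolding cmpP_def by (rule cmp_cong[OF cmp_mult]) auto

lemma cmpP_not: assumes P: "cmpP k P" shows "cmpP k (\<lambda>xs. \<not> P xs)"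
  using P unfolding cmpP_def by (rule cmp_cong[OF cmp_minus[OF cmp_const[of k 1]]]) auto

lemma cmpP_or: "cmpP k P \<Longrightarrow> cmpP k Q \<Longrightarrow> cmpP k (\<lambda>xs. P xs \<or> Q xs)"
  using cmpP_not[OF cmpP_and[OF cmpP_not cmpP_not], of k P Q] by simp

lemma cmpP_imp: "cmpP k P \<Longrightarrow> cmpP k Q \<Longrightarrow> cmpP k (\<lambda>xs. P xs \<longrightarrow> Q xs)"
  using cmpP_or[OF cmpP_not, of k P Q] by simp

lemma cmpP_eq: "cmp k f \<Longrightarrow> cmp k g \<Longrightarrow> cmpP k (\<lambda>xs. f xs = g xs)"
  using cmpP_and[OF cmpP_le cmpP_le, of k f g g f] by (simp add: eq_iff)

lemma cmp_if: assumes P: "cmpP k P" and f: "cmp k f" and g: "cmp k g"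
  shows "cmp k (\<lambda>xs. if P xs then f xs else g xs)"
proof -
  have "cmp k (\<lambda>xs. (if P xs then 1 else 0) * f xs + (1 - (if P xs then 1 else 0)) * g xs)"
    using P f g unfolding cmpP_def by (intro cmp_add cmp_mult cmp_minus cmp_const)
  then show ?thesis by (rule cmp_cong) auto
qed

lemma cmp_tl: "cmp k f \<Longrightarrow> cmp (Suc k) (\<lambda>ys. f (tl ys))"
proof -
  assume "cmp k f"
  then have "cmp (Suc k) (\<lambda>ys. f (map (\<lambda>g. g ys) (map (\<lambda>i ys. ys ! Suc i) [0..<k])))"
    by (intro cmp_comp) (auto intro: cmp_proj)
  then show ?thesis
  proof (rule cmp_cong)
    fix ys :: "nat list" assume "length ys = Suc k"
    then show "f (map (\<lambda>g. g ys) (map (\<lambda>i ys. ys ! Suc i) [0..<k])) = f (tl ys)"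
      by (cases ys) (auto simp: o_def map_proj)
  qed
qed

lemma div_least: "(0::nat) < g \<Longrightarrow> (LEAST m. f < g * Suc m) = f div g"
proof (rule Least_equality)
  assume g: "0 < g"
  show "f < g * Suc (f div g)"
    using g by (metis add.commute div_mult_mod_eq mod_less_divisor mult.commute mult_Suc_right nat_add_left_cancel_less)
  show "\<And>y. f < g * Suc y \<Longrightarrow> f div g \<le> y"
    using g by (metis less_Suc_eq_le less_mult_imp_div_less mult.commute)
qed

lemma cmp_div: "cmp k f \<Longrightarrow> cmp k g \<Longrightarrow> cmp k (\<lambda>xs. f xs div g xs)"
proof -
  assume f: "cmp k f" and g: "cmp k g"
  let ?F = "\<lambda>m xs. if g xs = 0 \<or> f xs < g xs * Suc m then 0 else (1::nat)"
  have "cmp k (\<lambda>xs. LEAST m. ?F m xs = 0)"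
  proof (rule cmp_mn')
    show "cmp (Suc k) (\<lambda>ys. ?F (hd ys) (tl ys))"
      using cmp_tl[OF f] cmp_tl[OF g]
      by (intro cmp_if cmpP_or cmpP_eq cmpP_less cmp_mult cmp_Suc cmp_const)
         (auto intro: cmp_hd)
  next
    fix xs :: "nat list"
    show "\<exists>n. ?F n xs = 0"
    proof (cases "g xs = 0")
      case False
      then have "Suc (f xs) \<le> g xs * Suc (f xs)" using mult_le_mono1[of 1 "g xs" "Suc (f xs)"] by simp
      then show ?thesis by (intro exI[of _ "f xs"]) auto
    qed auto
  qed
  then show ?thesis
  proof (rule cmp_cong)
    fix xs :: "nat list"
    show "(LEAST m. ?F m xs = 0) = f xs div g xs"
    proof (cases "g xs = 0")
      case False
      have "(LEAST m. ?F m xs = 0) = (LEAST m. f xs < g xs * Suc m)"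
        using False by (intro arg_cong[where f=Least]) (auto simp del: mult_Suc_right)
      then show ?thesis using False div_least[of "g xs" "f xs"] by simp
    qed auto
  qed
qed

lemma cmp_mod: assumes f: "cmp k f" and g: "cmp k g" shows "cmp k (\<lambda>xs. f xs mod g xs)"
  by (rule cmp_cong[OF cmp_minus[OF f cmp_mult[OF g cmp_div[OF f g]]]]) (auto simp: minus_mult_div_eq_mod)

lemma cmp_reindex:
  assumes "cmp m g" "\<And>i. i < m \<Longrightarrow> idx i < k"
  shows "cmp k (\<lambda>xs. g (map (\<lambda>i. xs ! idx i) [0..<m]))"
proof -
  have "cmp k (\<lambda>xs. g (map (\<lambda>f. f xs) (map (\<lambda>i xs. xs ! idx i) [0..<m])))"
    using assms by (intro cmp_comp) (auto intro: cmp_proj)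
  then show ?thesis by (simp add: o_def)
qed

lemma cmp_drop1:
  assumes "cmp (Suc k) (\<lambda>ys. h (hd ys) (tl ys))"
  shows "cmp (Suc (Suc k)) (\<lambda>ws. h (ws!0) (drop 2 ws))"
proof -
  let ?idx = "\<lambda>i. if i = 0 then 0 else Suc i"
  have "cmp (Suc (Suc k)) (\<lambda>xs. (\<lambda>ys. h (hd ys) (tl ys)) (map (\<lambda>i. xs ! ?idx i) [0..<Suc k]))"
    by (rule cmp_reindex[OF assms]) auto
  then show ?thesis
  proof (rule cmp_cong)
    fix ws :: "nat list" assume l: "length ws = Suc (Suc k)"
    have "map (\<lambda>i. ws ! ?idx i) [0..<Suc k] = ws ! 0 # drop 2 ws"
      using l by (auto intro!: nth_equalityI simp: nth_Cons' nth_drop simp del: upt_Suc)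
    then show "(\<lambda>ys. h (hd ys) (tl ys)) (map (\<lambda>i. ws ! ?idx i) [0..<Suc k]) = h (ws!0) (drop 2 ws)"
      by simp
  qed
qed

lemma rec_sum: "rec_nat 0 (\<lambda>n acc. acc + h n) m = (\<Sum>p<m. h p)"
  by (induction m) auto

lemma cmp_sum:
  assumes h: "cmp (Suc k) (\<lambda>ys. h (hd ys) (tl ys))" and e: "cmp k e"
  shows "cmp k (\<lambda>xs. \<Sum>p<e xs. h p xs)"
proof (rule cmp_rec'[where f="\<lambda>_. 0" and G="\<lambda>n acc xs. acc + h n xs"
        and H="\<lambda>ws. ws!1 + h (ws!0) (drop 2 ws)", OF cmp_zero e])
  show "cmp (Suc (Suc k)) (\<lambda>ws. ws ! 1 + h (ws ! 0) (drop 2 ws))"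
    by (intro cmp_add cmp_proj cmp_drop1[OF h]) simp
next
  fix xs :: "nat list"
  show "rec_nat 0 (\<lambda>n acc. acc + h n xs) (e xs) = (\<Sum>p<e xs. h p xs)"
    by (rule rec_sum)
qed simp

lemma cmp_sum': 
  assumes h: "cmp (Suc k) H" "\<And>ys. length ys = Suc k \<Longrightarrow> H ys = h (hd ys) (tl ys)" and e: "cmp k e"
  shows "cmp k (\<lambda>xs. \<Sum>p<e xs. h p xs)"
  using cmp_sum[OF cmp_cong[OF h(1)] e] h(2) by blast

lemma triangle_mono: "m \<le> n \<Longrightarrow> triangle m \<le> triangle n"
  by (induction n) (auto simp: le_Suc_eq)

lemma cmp_triangle: "cmp k f \<Longrightarrow> cmp k (\<lambda>xs. triangle (f xs))"
  unfolding triangle_def by (intro cmp_div cmp_mult cmp_Suc cmp_const)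

lemma cmp_pe: "cmp k f \<Longrightarrow> cmp k g \<Longrightarrow> cmp k (\<lambda>xs. prod_encode (f xs, g xs))"
  unfolding prod_encode_def by (simp, intro cmp_add cmp_triangle)

definition pdsum :: "nat \<Rightarrow> nat" where
  "pdsum k = (LEAST s. k < triangle (Suc s))"

lemma pdsum_eq: "pdsum k = fst (prod_decode k) + snd (prod_decode k)"
proof -
  obtain a b where ab: "prod_decode k = (a, b)" by fastforce
  have k: "k = triangle (a + b) + a" using prod_decode_inverse[of k] ab by (simp add: prod_encode_def)
  have "pdsum k = a + b" unfolding pdsum_def
  proof (rule Least_equality)
    show "k < triangle (Suc (a + b))" using k by simp
    fix s assume s: "k < triangle (Suc s)"
    show "a + b \<le> s"
    proof (rule ccontr)
      assume "\<not> a + b \<le> s"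
      then have "triangle (Suc s) \<le> triangle (a + b)" by (intro triangle_mono) simp
      then show False using s k by simp
    qed
  qed
  then show ?thesis using ab by simp
qed

lemma fst_pd: "fst (prod_decode k) = k - triangle (pdsum k)"
proof -
  obtain a b where ab: "prod_decode k = (a, b)" by fastforce
  have k: "k = triangle (a + b) + a" using prod_decode_inverse[of k] ab by (simp add: prod_encode_def)
  show ?thesis using ab k pdsum_eq[of k] by simp
qed

lemma snd_pd: "snd (prod_decode k) = pdsum k - fst (prod_decode k)"
  using pdsum_eq[of k] by simp

lemma cmp_pdsum: "cmp k f \<Longrightarrow> cmp k (\<lambda>xs. pdsum (f xs))"
proof -
  assume f: "cmp k f"
  let ?F = "\<lambda>s xs. if f xs < triangle (Suc s) then 0 else (1::nat)"
  have "cmp k (\<lambda>xs. LEAST s. ?F s xs = 0)"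
  proof (rule cmp_mn')
    show "cmp (Suc k) (\<lambda>ys. ?F (hd ys) (tl ys))"
      using cmp_tl[OF f] by (intro cmp_if cmpP_less cmp_triangle cmp_Suc cmp_hd cmp_const)
  next
    fix xs :: "nat list"
    have "f xs < triangle (Suc (f xs))" using le_add2[of "f xs" "triangle (f xs)"] by simp
    then show "\<exists>n. ?F n xs = 0" by (intro exI[of _ "f xs"]) simp
  qed
  then show ?thesis unfolding pdsum_def
    by (rule cmp_cong) (auto intro!: arg_cong[where f=Least])
qed

lemma cmp_fst: "cmp k f \<Longrightarrow> cmp k (\<lambda>xs. fst (prod_decode (f xs)))"
  unfolding fst_pd by (intro cmp_minus cmp_triangle cmp_pdsum)

lemma cmp_snd: "cmp k f \<Longrightarrow> cmp k (\<lambda>xs. snd (prod_decode (f xs)))"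
  unfolding snd_pd by (intro cmp_minus cmp_fst cmp_pdsum)

definition ltl :: "nat \<Rightarrow> nat" where "ltl c = snd (prod_decode (c - 1))"
definition lhd :: "nat \<Rightarrow> nat" where "lhd c = fst (prod_decode (c - 1))"
definition ltln :: "nat \<Rightarrow> nat \<Rightarrow> nat" where "ltln k c = rec_nat c (\<lambda>_ acc. ltl acc) k"
definition lnth :: "nat \<Rightarrow> nat \<Rightarrow> nat" where "lnth c k = lhd (ltln k c)"
definition llen :: "nat \<Rightarrow> nat" where "llen c = (LEAST k. ltln k c = 0)"

lemma ltln_simps[simp]: "ltln 0 c = c" "ltln (Suc k) c = ltl (ltln k c)"
  by (simp_all add: ltln_def)

lemma list_decode_pos: "0 < c \<Longrightarrow> list_decode c = lhd c # list_decode (ltl c)"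
  by (cases c) (auto simp: lhd_def ltl_def split: prod.splits)

lemma ltl_0: "ltl 0 = 0"
proof -
  have "prod_decode 0 = (0, 0)" using prod_encode_inverse[of "(0,0)"] by (simp add: prod_encode_def)
  then show ?thesis by (simp add: ltl_def)
qed

lemma list_decode_ltl: "list_decode (ltl c) = tl (list_decode c)"
  by (cases "c = 0") (auto simp: ltl_0 list_decode_pos)

lemma list_decode_ltln: "list_decode (ltln k c) = drop k (list_decode c)"
  by (induction k) (auto simp: list_decode_ltl drop_Suc tl_drop)

lemma list_decode_eq_Nil: "list_decode c = [] \<longleftrightarrow> c = 0"
  by (metis list_decode.simps(1) list_decode_inverse list_encode.simps(1))

lemma lnth_eq: "k < length (list_decode c) \<Longrightarrow> lnth c k = list_decode c ! k"
proof -
  assume k: "k < length (list_decode c)"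
  then have ne: "list_decode (ltln k c) \<noteq> []" by (simp add: list_decode_ltln)
  then have "0 < ltln k c" using list_decode_eq_Nil by auto
  then have "list_decode (ltln k c) = lhd (ltln k c) # list_decode (ltl (ltln k c))" by (rule list_decode_pos)
  then have "lhd (ltln k c) = hd (drop k (list_decode c))" by (simp add: list_decode_ltln[symmetric])
  then show ?thesis using k by (simp add: lnth_def hd_drop_conv_nth)
qed

lemma llen_eq: "llen c = length (list_decode c)"
  unfolding llen_def
proof (rule Least_equality)
  show "ltln (length (list_decode c)) c = 0"
    using list_decode_ltln[of "length (list_decode c)" c] list_decode_eq_Nil by auto
  fix y assume "ltln y c = 0"
  then have "drop y (list_decode c) = []" using list_decode_ltln[of y c] by simp
  then show "length (list_decode c) \<le> y" by simp
qed

lemma cmp_ltl: "cmp k f \<Longrightarrow> cmp k (\<lambda>xs. ltl (f xs))"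
  unfolding ltl_def by (intro cmp_snd cmp_minus cmp_const)

lemma cmp_lhd: "cmp k f \<Longrightarrow> cmp k (\<lambda>xs. lhd (f xs))"
  unfolding lhd_def by (intro cmp_fst cmp_minus cmp_const)

lemma cmp_ltln: assumes k: "cmp k f" "cmp k c" shows "cmp k (\<lambda>xs. ltln (f xs) (c xs))"
  unfolding ltln_def
  by (rule cmp_rec'[where G="\<lambda>n acc xs. ltl acc" and H="\<lambda>ws. ltl (ws!1)", OF assms(2,1)])
     (auto intro!: cmp_ltl cmp_proj)

lemma cmp_lnth: "cmp k c \<Longrightarrow> cmp k f \<Longrightarrow> cmp k (\<lambda>xs. lnth (c xs) (f xs))"
  unfolding lnth_def by (intro cmp_lhd cmp_ltln)

lemma cmp_llen: assumes c: "cmp k c" shows "cmp k (\<lambda>xs. llen (c xs))"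
proof -
  have "cmp k (\<lambda>xs. LEAST n. (if ltln n (c xs) = 0 then 0 else 1) = (0::nat))"
  proof (rule cmp_mn')
    show "cmp (Suc k) (\<lambda>ys. if ltln (hd ys) (c (tl ys)) = 0 then 0 else 1)"
      using cmp_tl[OF c] by (intro cmp_if cmpP_eq cmp_ltln cmp_hd cmp_const)
  next
    fix xs :: "nat list"
    show "\<exists>n. (if ltln n (c xs) = 0 then 0 else 1) = (0::nat)"
      using llen_eq[of "c xs"] LeastI_ex unfolding llen_def
      by (metis (no_types, lifting) drop_all list_decode_eq_Nil list_decode_ltln order_refl)
  qed
  then show ?thesis unfolding llen_def by (rule cmp_cong) (auto intro!: arg_cong[where f=Least])
qed

lemma cmp_ext_fun: "computable f \<Longrightarrow> cmp k g \<Longrightarrow> cmp k (\<lambda>xs. f (g xs))"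
proof -
  assume "computable f" "cmp k g"
  then obtain p where p: "\<forall>n. rf_eval p [n] (f n)" unfolding computable_def by auto
  have "cmp 1 (\<lambda>ys. f (ys!0))" unfolding cmp_def
    using p by (auto intro!: exI[of _ p] simp: length_Suc_conv)
  then show ?thesis using \<open>cmp k g\<close> by (rule cmp_un)
qed

lemma decidable4I:
  assumes "cmpP 4 (\<lambda>xs. R (xs!0) (xs!1) (xs!2) (xs!3))"
  shows "decidable4 R"
proof -
  let ?n = "\<lambda>xs. fst (prod_decode (xs!0))"
  let ?a = "\<lambda>xs. fst (prod_decode (snd (prod_decode (xs!0))))"
  let ?b = "\<lambda>xs. fst (prod_decode (snd (prod_decode (snd (prod_decode (xs!0))))))"
  let ?c = "\<lambda>xs. snd (prod_decode (snd (prod_decode (snd (prod_decode (xs!0))))))"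
  have "cmp 1 (\<lambda>xs. (\<lambda>ys. if R (ys!0) (ys!1) (ys!2) (ys!3) then 1 else 0) (map (\<lambda>f. f xs) [?n, ?a, ?b, ?c]))"
    using assms unfolding cmpP_def
    by (rule cmp_comp) (auto intro!: cmp_fst cmp_snd cmp_proj)
  then obtain p where p: "\<forall>xs. length xs = 1 \<longrightarrow> rf_eval p xs ((\<lambda>ys. if R (ys!0) (ys!1) (ys!2) (ys!3) then 1 else 0) (map (\<lambda>f. f xs) [?n, ?a, ?b, ?c]))"
    unfolding cmp_def by blast
  show ?thesis unfolding decidable4_def computable_def
  proof (rule exI[of _ p], rule allI)
    fix k
    have "rf_eval p [k] (if R (fst (prod_decode k)) (fst (prod_decode (snd (prod_decode k))))
       (fst (prod_decode (snd (prod_decode (snd (prod_decode k))))))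
       (snd (prod_decode (snd (prod_decode (snd (prod_decode k)))))) then 1 else 0)"
      using p[rule_format, of "[k]"] by (simp add: numeral_3_eq_3)
    then show "rf_eval p [k] (case prod_decode k of (n, k1) \<Rightarrow> (case prod_decode k1 of (a, k2) \<Rightarrow>
       (case prod_decode k2 of (b, c) \<Rightarrow> (if R n a b c then 1 else 0))))"
      by (simp add: split_beta)
qed
qed

fun win :: "nat \<Rightarrow> (int \<Rightarrow> nat) \<Rightarrow> int \<Rightarrow> nat \<Rightarrow> nat" where
  "win q c z 0 = 0"
| "win q c z (Suc L) = win q c z L * q + c (z + int L)"

lemma win_split: "win q c z (a + b) = win q c z a * q ^ b + win q c (z + int a) b"
  by (induction b) (auto simp: algebra_simps)

lemma win_bound: "(\<And>y. c y < q) \<Longrightarrow> win q c z L < q ^ L"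
proof (induction L)
  case 0 then show ?case by simp
next
  case (Suc L)
  then have "Suc (win q c z L) * q \<le> q ^ L * q" by (intro mult_le_mono1) simp
  moreover have "c (z + int L) < q" using Suc by simp
  ultimately show ?case by (simp add: mult.commute)
qed

lemma word_index_win:
  "word_index q (map (\<lambda>i. c (y + i)) [a..a + int L - 1]) = win q c (y + a) L"
proof (induction L)
  case 0 then show ?case by (simp add: word_index_def)
next
  case (Suc L)
  have "[a..a + int (Suc L) - 1] = [a..a + int L - 1] @ [a + int L]"
    using upto_rec2[of a "a + int L"] by simp
  then show ?case using Suc by (simp add: word_index_def add.assoc)
qed

lemma global_map_win:
  "global_map q n c z = ca_table n ! win q c (z - int (ca_radius n)) (2 * ca_radius n + 1)"
proof -
  have "[- int (ca_radius n) .. int (ca_radius n)] =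
        [- int (ca_radius n) .. - int (ca_radius n) + int (2 * ca_radius n + 1) - 1]" by simp
  then show ?thesis
    unfolding global_map_def local_rule_def
    using word_index_win[of q c z "- int (ca_radius n)" "2 * ca_radius n + 1"] by simp
qed

lemma global_map_configs:
  assumes "valid_ca q n" "c \<in> configs q"
  shows "global_map q n c \<in> configs q"
proof -
  { fix z
    have "win q c (z - int (ca_radius n)) (2 * ca_radius n + 1) < q ^ (2 * ca_radius n + 1)"
      using assms(2) by (intro win_bound) (auto simp: configs_def)
    then have "ca_table n ! win q c (z - int (ca_radius n)) (2 * ca_radius n + 1) \<in> set (ca_table n)"
      using assms(1) by (auto simp: valid_ca_def)
    then have "global_map q n c z < q" using assms(1) by (auto simp: global_map_win valid_ca_def words_def) }
  then show ?thesis by (auto simp: configs_def)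
qed

lemma funpow_configs:
  assumes "valid_ca q n" "c \<in> configs q"
  shows "(global_map q n ^^ t) c \<in> configs q"
  by (induction t) (auto intro: global_map_configs[OF assms(1)] simp: assms(2))

definition stepnum :: "nat \<Rightarrow> nat \<Rightarrow> nat \<Rightarrow> nat \<Rightarrow> nat" where
  "stepnum q n M X = (\<Sum>p<M. lnth (snd (prod_decode n)) ((X div q ^ p) mod q ^ (2 * fst (prod_decode n) + 1)) * q ^ p)"

lemma stepnum_Suc:
  "stepnum q n (Suc M) X = lnth (snd (prod_decode n)) (X mod q ^ (2 * fst (prod_decode n) + 1)) + q * stepnum q n M (X div q)"
proof -
  have "stepnum q n (Suc M) X = lnth (snd (prod_decode n)) (X mod q ^ (2 * fst (prod_decode n) + 1)) +
     (\<Sum>p<M. lnth (snd (prod_decode n)) ((X div q ^ Suc p) mod q ^ (2 * fst (prod_decode n) + 1)) * q ^ Suc p)"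
    unfolding stepnum_def by (subst sum.lessThan_Suc_shift) simp
  also have "(\<Sum>p<M. lnth (snd (prod_decode n)) ((X div q ^ Suc p) mod q ^ (2 * fst (prod_decode n) + 1)) * q ^ Suc p)
     = q * stepnum q n M (X div q)"
    unfolding stepnum_def sum_distrib_left
    by (intro sum.cong) (auto simp: div_mult2_eq mult_ac)
  finally show ?thesis .
qed

lemma lnth_table: "valid_ca q n \<Longrightarrow> k < q ^ (2 * ca_radius n + 1) \<Longrightarrow> lnth (snd (prod_decode n)) k = ca_table n ! k"
  by (simp add: lnth_eq valid_ca_def ca_table_def)

lemma step_win:
  assumes v: "valid_ca q n" and c: "c \<in> configs q"
  shows "win q (global_map q n c) (z + int (ca_radius n)) M = stepnum q n M (win q c z (M + 2 * ca_radius n))"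
proof (induction M)
  case 0 then show ?case by (simp add: stepnum_def)
next
  case (Suc M)
  let ?r = "ca_radius n"
  let ?X = "win q c z (Suc M + 2 * ?r)"
  have cq: "\<And>y. c y < q" using c by (auto simp: configs_def)
  have X: "?X = win q c z (M + 2 * ?r) * q + c (z + int (M + 2 * ?r))" by simp
  have Xd: "?X div q = win q c z (M + 2 * ?r)"
    using X cq[of "z + int (M + 2 * ?r)"] by simp
  have "?X = win q c z M * q ^ (2 * ?r + 1) + win q c (z + int M) (2 * ?r + 1)"
    using win_split[of q c z M "2 * ?r + 1"] by simp
  then have Xm: "?X mod q ^ (2 * ?r + 1) = win q c (z + int M) (2 * ?r + 1)"
    using win_bound[where c=c and q=q and z="z + int M" and L="2 * ?r + 1", OF cq] by simp
  have wb: "win q c (z + int M) (2 * ?r + 1) < q ^ (2 * ?r + 1)" by (rule win_bound[OF cq])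
  have "global_map q n c (z + int ?r + int M) = ca_table n ! win q c (z + int M) (2 * ?r + 1)"
    by (simp add: global_map_win add_ac)
  then show ?case
    using Suc Xd Xm lnth_table[OF v wb]
    by (simp add: stepnum_Suc ca_radius_def mult.commute)
qed

definition itn :: "nat \<Rightarrow> nat \<Rightarrow> nat \<Rightarrow> nat \<Rightarrow> nat" where
  "itn q n t j = rec_nat j (\<lambda>s acc. stepnum q n (2 * fst (prod_decode n) * (t - Suc s) + 1) acc) t"

lemma iter_win:
  assumes v: "valid_ca q n" and c: "c \<in> configs q"
  shows "s \<le> t \<Longrightarrow> win q ((global_map q n ^^ s) c) (z0 + int (ca_radius n * s)) (2 * ca_radius n * (t - s) + 1)
     = rec_nat (win q c z0 (2 * ca_radius n * t + 1)) (\<lambda>s acc. stepnum q n (2 * fst (prod_decode n) * (t - Suc s) + 1) acc) s"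
proof (induction s)
  case 0 then show ?case by simp
next
  case (Suc s)
  let ?r = "ca_radius n"
  have cs: "(global_map q n ^^ s) c \<in> configs q" by (rule funpow_configs[OF v c])
  have e: "2 * ?r * (t - Suc s) + 1 + 2 * ?r = 2 * ?r * (t - s) + 1" using Suc.prems
    by (simp add: Suc_diff_Suc[symmetric] algebra_simps)
  have A: "win q (global_map q n ((global_map q n ^^ s) c)) (z0 + int (?r * s) + int ?r) (2 * ?r * (t - Suc s) + 1)
       = stepnum q n (2 * ?r * (t - Suc s) + 1) (win q ((global_map q n ^^ s) c) (z0 + int (?r * s)) (2 * ?r * (t - Suc s) + 1 + 2 * ?r))"
    by (rule step_win[OF v cs])
  have B: "global_map q n ((global_map q n ^^ s) c) = (global_map q n ^^ Suc s) c" by simp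
  have C: "z0 + int (?r * s) + int ?r = z0 + int (?r * Suc s)" by simp
  have D: "win q ((global_map q n ^^ s) c) (z0 + int (?r * s)) (2 * ?r * (t - s) + 1) =
     rec_nat (win q c z0 (2 * ca_radius n * t + 1)) (\<lambda>s acc. stepnum q n (2 * fst (prod_decode n) * (t - Suc s) + 1) acc) s"
    using Suc by simp
  have "win q ((global_map q n ^^ Suc s) c) (z0 + int (?r * Suc s)) (2 * ?r * (t - Suc s) + 1)
     = stepnum q n (2 * ?r * (t - Suc s) + 1) (rec_nat (win q c z0 (2 * ca_radius n * t + 1)) (\<lambda>s acc. stepnum q n (2 * fst (prod_decode n) * (t - Suc s) + 1) acc) s)"
    using A unfolding B C e D .
  then show ?case by (simp add: ca_radius_def del: win.simps)
qed

lemma final_win: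
  assumes v: "valid_ca q n" and c: "c \<in> configs q"
  shows "(global_map q n ^^ t) c (z0 + int (ca_radius n * t)) = itn q n t (win q c z0 (2 * ca_radius n * t + 1))"
  using iter_win[OF v c, of t t z0] by (simp add: itn_def)

definition wordof :: "nat \<Rightarrow> nat \<Rightarrow> nat \<Rightarrow> nat list" where
  "wordof q L j = map (\<lambda>i. j div q ^ (L - 1 - i) mod q) [0..<L]"

lemma pow_aux: "i < (L::nat) \<Longrightarrow> q * q ^ (L - Suc i) = q ^ (L - i)"
proof -
  assume "i < L"
  then have "L - i = Suc (L - Suc i)" by simp
  then show ?thesis by simp
qed

lemma wordof_snoc: "wordof q (Suc L) j = wordof q L (j div q) @ [j mod q]"
proof (rule nth_equalityI)
  show "length (wordof q (Suc L) j) = length (wordof q L (j div q) @ [j mod q])" by (simp add: wordof_def)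
  fix i assume "i < length (wordof q (Suc L) j)"
  then have i: "i < Suc L" by (simp add: wordof_def)
  show "wordof q (Suc L) j ! i = (wordof q L (j div q) @ [j mod q]) ! i"
  proof (cases "i < L")
    case True
    have "j div q ^ (L - i) = j div q div q ^ (L - 1 - i)"
      using pow_aux[OF True, of q] by (simp add: div_mult2_eq[symmetric])
    then show ?thesis using True i unfolding wordof_def by (simp add: nth_append del: upt_Suc)
  next
    case False
    then have "i = L" using i by simp
    then show ?thesis unfolding wordof_def by (simp add: nth_append del: upt_Suc)
  qed
qed

lemma wordof_cons: "wordof q (Suc L) j = (j div q ^ L mod q) # wordof q L j"
  unfolding wordof_def
  by (auto intro!: nth_equalityI simp: nth_Cons' simp del: upt_Suc)

lemma length_wordof[simp]: "length (wordof q L j) = L"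
  by (simp add: wordof_def)

lemma wordof_words: "0 < q \<Longrightarrow> wordof q L j \<in> words q"
  by (auto simp: wordof_def words_def)

lemma cyl_snoc: "c \<in> cyl q (xs @ [d]) z \<longleftrightarrow> c \<in> cyl q xs z \<and> c (z + int (length xs)) = d"
  unfolding cyl_def by (auto simp: nth_append less_Suc_eq)

lemma cyl_wordof:
  assumes q: "0 < q"
  shows "j < q ^ L \<Longrightarrow> c \<in> cyl q (wordof q L j) z \<longleftrightarrow> c \<in> configs q \<and> win q c z L = j"
proof (induction L arbitrary: j)
  case 0 then show ?case by (simp add: cyl_def wordof_def)
next
  case (Suc L)
  have jd: "j div q < q ^ L" using Suc.prems q by (simp add: div_less_iff_less_mult mult.commute)
  show ?case
  proof
    assume "c \<in> cyl q (wordof q (Suc L) j) z"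
    then have "c \<in> cyl q (wordof q L (j div q)) z" "c (z + int L) = j mod q"
      unfolding wordof_snoc cyl_snoc by auto
    then have "c \<in> configs q" "win q c z L = j div q" using Suc.IH[OF jd] by auto
    then show "c \<in> configs q \<and> win q c z (Suc L) = j" using \<open>c (z + int L) = j mod q\<close> by simp
  next
    assume a: "c \<in> configs q \<and> win q c z (Suc L) = j"
    then have cl: "c (z + int L) < q" by (auto simp: configs_def)
    have w: "win q c z L * q + c (z + int L) = j" using a by simp
    have "j div q = win q c z L" using cl unfolding w[symmetric] by simp
    moreover have "j mod q = c (z + int L)" using cl unfolding w[symmetric] by simp
    ultimately have "c \<in> cyl q (wordof q L (j div q)) z" "c (z + int L) = j mod q"
      using Suc.IH[OF jd] a by auto
    then show "c \<in> cyl q (wordof q (Suc L) j) z"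
      unfolding wordof_snoc cyl_snoc by simp
  qed
qed

definition lc :: "nat \<Rightarrow> nat \<Rightarrow> nat \<Rightarrow> nat" where
  "lc q L j = rec_nat 0 (\<lambda>p acc. Suc (prod_encode (j div q ^ p mod q, acc))) L"

lemma lc_eq: "lc q L j = list_encode (wordof q L j)"
proof (induction L)
  case 0 then show ?case by (simp add: lc_def wordof_def)
next
  case (Suc L)
  have "lc q (Suc L) j = Suc (prod_encode (j div q ^ L mod q, lc q L j))" by (simp add: lc_def)
  then show ?case using Suc by (simp only: wordof_cons list_encode.simps)
qed

lemma cyl_sub: "cyl q u k \<subseteq> configs q" by (auto simp: cyl_def)

lemma space_mu: "shift_invariant_prob q \<mu> \<Longrightarrow> space \<mu> = configs q"
proof -
  assume "shift_invariant_prob q \<mu>"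
  then have "sets \<mu> = sets (config_space q)" by (simp add: shift_invariant_prob_def)
  then have "space \<mu> = space (config_space q)" by (rule sets_eq_imp_space_eq)
  then show ?thesis by (simp add: config_space_def space_measure_of_conv)
qed

lemma cyl_sets: "shift_invariant_prob q \<mu> \<Longrightarrow> u \<in> words q \<Longrightarrow> cyl q u k \<in> sets \<mu>"
proof -
  assume a: "shift_invariant_prob q \<mu>" "u \<in> words q"
  have "{cyl q u k | u k. u \<in> words q} \<subseteq> Pow (configs q)" using cyl_sub by auto
  then have "cyl q u k \<in> sets (config_space q)" unfolding config_space_def
    using a(2) by (intro in_measure_of) auto
  then show ?thesis using a(1) by (simp add: shift_invariant_prob_def)
qed

lemma shift_cyl: "shift -` cyl q u k \<inter> configs q = cyl q u (k + 1)"
  by (auto simp: cyl_def configs_def shift_def add_ac)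

lemma cyl_measure_shift:
  assumes "shift_invariant_prob q \<mu>" "u \<in> words q"
  shows "measure \<mu> (cyl q u (k + 1)) = measure \<mu> (cyl q u k)"
  using assms cyl_sets[OF assms] space_mu[OF assms(1)] shift_cyl[of q u k]
  unfolding shift_invariant_prob_def by metis

lemma cyl_measure_0:
  assumes "shift_invariant_prob q \<mu>" "u \<in> words q"
  shows "measure \<mu> (cyl q u k) = measure \<mu> (cyl q u 0)"
proof -
  have p: "measure \<mu> (cyl q u (int m)) = measure \<mu> (cyl q u 0)" for m
  proof (induction m)
    case (Suc m)
    have "measure \<mu> (cyl q u (int m + 1)) = measure \<mu> (cyl q u (int m))" by (rule cyl_measure_shift[OF assms])
    then show ?case using Suc by (simp add: add.commute)
  qed simp
  have m: "measure \<mu> (cyl q u (- int m)) = measure \<mu> (cyl q u 0)" for m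
  proof (induction m)
    case 0 then show ?case by simp
  next
    case (Suc m)
    have "measure \<mu> (cyl q u (- int (Suc m) + 1)) = measure \<mu> (cyl q u (- int (Suc m)))"
      by (rule cyl_measure_shift[OF assms])
    then show ?case using Suc by simp
  qed
  show ?thesis
  proof (cases "k \<ge> 0")
    case True then show ?thesis using p[of "nat k"] by simp
  next
    case False then show ?thesis using m[of "nat (-k)"] by simp
  qed
qed

definition pre :: "nat \<Rightarrow> nat \<Rightarrow> nat \<Rightarrow> nat list \<Rightarrow> int \<Rightarrow> (int \<Rightarrow> nat) set" where
  "pre q n t u z = (global_map q n ^^ t) -` cyl q u z \<inter> configs q"

definition Jset :: "nat \<Rightarrow> nat \<Rightarrow> nat \<Rightarrow> nat \<Rightarrow> nat set" where
  "Jset q n t x = {j. j < q ^ (2 * ca_radius n * t + 1) \<and> itn q n t j = x}"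

lemma pre_single:
  assumes v: "valid_ca q n" and q: "0 < q"
  shows "pre q n t [x] z = (\<Union>j\<in>Jset q n t x. cyl q (wordof q (2 * ca_radius n * t + 1) j) (z - int (ca_radius n * t)))"
    (is "_ = ?R")
proof (intro equalityI subsetI)
  fix c assume c: "c \<in> pre q n t [x] z"
  then have cc: "c \<in> configs q" by (simp add: pre_def)
  have "(global_map q n ^^ t) c z = x" using c by (auto simp: pre_def cyl_def)
  then have e: "itn q n t (win q c (z - int (ca_radius n * t)) (2 * ca_radius n * t + 1)) = x"
    using final_win[OF v cc, of t "z - int (ca_radius n * t)"] by simp
  have b: "win q c (z - int (ca_radius n * t)) (2 * ca_radius n * t + 1) < q ^ (2 * ca_radius n * t + 1)"
    using cc by (intro win_bound) (auto simp: configs_def)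
  show "c \<in> ?R" using e b cc cyl_wordof[OF q b] by (auto simp: Jset_def)
next
  fix c assume "c \<in> ?R"
  then obtain j where j: "j \<in> Jset q n t x" "c \<in> cyl q (wordof q (2 * ca_radius n * t + 1) j) (z - int (ca_radius n * t))"
    by auto
  then have cc: "c \<in> configs q" and w: "win q c (z - int (ca_radius n * t)) (2 * ca_radius n * t + 1) = j"
    using cyl_wordof[OF q] by (auto simp: Jset_def)
  have "(global_map q n ^^ t) c z = x"
    using final_win[OF v cc, of t "z - int (ca_radius n * t)"] w j(1) by (simp add: Jset_def)
  then show "c \<in> pre q n t [x] z"
    using funpow_configs[OF v cc, of t] cc by (auto simp: pre_def cyl_def)
qed

lemma pre_single_measure:
  assumes si: "shift_invariant_prob q \<mu>" and v: "valid_ca q n" and q: "0 < q"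
  shows "pre q n t [x] z \<in> sets \<mu>"
    and "measure \<mu> (pre q n t [x] z) = (\<Sum>j\<in>Jset q n t x. measure \<mu> (cyl q (wordof q (2 * ca_radius n * t + 1) j) 0))"
proof -
  let ?L = "2 * ca_radius n * t + 1"
  let ?A = "\<lambda>j. cyl q (wordof q ?L j) (z - int (ca_radius n * t))"
  interpret prob_space \<mu> using si by (simp add: shift_invariant_prob_def)
  have fin: "finite (Jset q n t x)" by (simp add: Jset_def)
  have sets: "?A ` Jset q n t x \<subseteq> sets \<mu>" using cyl_sets[OF si wordof_words[OF q]] by auto
  show "pre q n t [x] z \<in> sets \<mu>" unfolding pre_single[OF v q]
    using fin sets by (intro sets.finite_UN) auto
  have disj: "disjoint_family_on ?A (Jset q n t x)"
    unfolding disjoint_family_on_def using cyl_wordof[OF q] by (auto simp: Jset_def)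
  have "measure \<mu> (pre q n t [x] z) = (\<Sum>j\<in>Jset q n t x. measure \<mu> (?A j))"
    unfolding pre_single[OF v q] using fin sets disj by (intro measure_finite_Union) (auto simp: emeasure_finite)
  also have "\<dots> = (\<Sum>j\<in>Jset q n t x. measure \<mu> (cyl q (wordof q ?L j) 0))"
    by (intro sum.cong refl cyl_measure_0[OF si wordof_words[OF q]])
  finally show "measure \<mu> (pre q n t [x] z) = (\<Sum>j\<in>Jset q n t x. measure \<mu> (cyl q (wordof q (2 * ca_radius n * t + 1) j) 0))" .
qed

lemma pre_general:
  assumes v: "valid_ca q n" and u: "u \<in> words q"
  shows "pre q n t u z = configs q \<inter> (\<Inter>i<length u. pre q n t [u ! i] (z + int i))"
  using funpow_configs[OF v] by (auto simp: pre_def cyl_def)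

lemma pre_sets:
  assumes si: "shift_invariant_prob q \<mu>" and v: "valid_ca q n" and q: "0 < q" and u: "u \<in> words q"
  shows "pre q n t u z \<in> sets \<mu>"
proof -
  interpret prob_space \<mu> using si by (simp add: shift_invariant_prob_def)
  have "configs q \<in> sets \<mu>" using space_mu[OF si] by (metis sets.top)
  show ?thesis unfolding pre_general[OF v u]
  proof (cases "length u = 0")
    case True then show "configs q \<inter> (\<Inter>i<length u. pre q n t [u ! i] (z + int i)) \<in> events"
      using \<open>configs q \<in> sets \<mu>\<close> by simp
  next
    case False
    then show "configs q \<inter> (\<Inter>i<length u. pre q n t [u ! i] (z + int i)) \<in> events"
      using \<open>configs q \<in> sets \<mu>\<close> pre_single_measure(1)[OF si v q]
      by (intro sets.Int sets.finite_INT) auto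
  qed
qed

definition aval :: "nat \<Rightarrow> (int \<Rightarrow> nat) measure \<Rightarrow> nat \<Rightarrow> nat \<Rightarrow> nat \<Rightarrow> real" where
  "aval q \<mu> n t x = measure \<mu> (pre q n t [x] 0)"

lemma aval_z:
  assumes si: "shift_invariant_prob q \<mu>" and v: "valid_ca q n" and q: "0 < q"
  shows "measure \<mu> (pre q n t [x] z) = aval q \<mu> n t x"
  unfolding aval_def pre_single_measure(2)[OF assms] ..

lemma L_mu_pre:
  assumes si: "shift_invariant_prob q \<mu>"
  shows "L_mu q \<mu> n = {u \<in> words q. \<not> ((\<lambda>t. measure \<mu> (pre q n t u 0)) \<longlonglongrightarrow> 0)}"
  unfolding L_mu_def pre_def space_mu[OF si] ..

lemma nil_iff:
  assumes si: "shift_invariant_prob q \<mu>" and v: "valid_ca q n" and q: "0 < q"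
  shows "mu_nilpotent q \<mu> n \<longleftrightarrow> (\<exists>s<q. \<forall>x<q. x \<noteq> s \<longrightarrow> (\<lambda>t. aval q \<mu> n t x) \<longlonglongrightarrow> 0)"
proof
  assume "mu_nilpotent q \<mu> n"
  then obtain s where s: "s < q" "L_mu q \<mu> n = {replicate k s | k. True}"
    by (auto simp: mu_nilpotent_def)
  show "\<exists>s<q. \<forall>x<q. x \<noteq> s \<longrightarrow> (\<lambda>t. aval q \<mu> n t x) \<longlonglongrightarrow> 0"
  proof (intro exI[of _ s] conjI allI impI)
    fix x assume x: "x < q" "x \<noteq> s"
    have "[x] \<notin> L_mu q \<mu> n" using s(2) x(2) by (auto simp: Cons_replicate_eq)
    moreover have "[x] \<in> words q" using x by (simp add: words_def)
    ultimately show "(\<lambda>t. aval q \<mu> n t x) \<longlonglongrightarrow> 0" unfolding L_mu_pre[OF si] aval_def by auto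
  qed (rule s(1))
next
  assume "\<exists>s<q. \<forall>x<q. x \<noteq> s \<longrightarrow> (\<lambda>t. aval q \<mu> n t x) \<longlonglongrightarrow> 0"
  then obtain s where s: "s < q" and lim: "\<And>x. x < q \<Longrightarrow> x \<noteq> s \<Longrightarrow> (\<lambda>t. aval q \<mu> n t x) \<longlonglongrightarrow> 0" by auto
  interpret prob_space \<mu> using si by (simp add: shift_invariant_prob_def)
  have "L_mu q \<mu> n = {replicate k s | k. True}"
  proof (intro equalityI subsetI)
    fix u assume uL: "u \<in> L_mu q \<mu> n"
    then have u: "u \<in> words q" and nl: "\<not> ((\<lambda>t. measure \<mu> (pre q n t u 0)) \<longlonglongrightarrow> 0)"
      unfolding L_mu_pre[OF si] by auto
    show "u \<in> {replicate k s | k. True}"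
    proof (rule ccontr)
      assume "u \<notin> {replicate k s | k. True}"
      then have "u \<noteq> replicate (length u) s" by auto
      then obtain i where i: "i < length u" "u ! i \<noteq> s"
        by (metis (mono_tags, lifting) length_replicate nth_equalityI nth_replicate)
      have ui: "u ! i < q" using u i(1) by (auto simp: words_def)
      have le: "measure \<mu> (pre q n t u 0) \<le> aval q \<mu> n t (u ! i)" for t
      proof -
        have "pre q n t u 0 \<subseteq> pre q n t [u ! i] (int i)"
          using pre_general[OF v u, of t 0] i(1) by auto
        then have "measure \<mu> (pre q n t u 0) \<le> measure \<mu> (pre q n t [u ! i] (int i))"
          by (intro finite_measure_mono pre_single_measure(1)[OF si v q])
        then show ?thesis using aval_z[OF si v q] by simp
      qed
      have "(\<lambda>t. measure \<mu> (pre q n t u 0)) \<longlonglongrightarrow> 0"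
        by (rule tendsto_sandwich[of "\<lambda>_. 0" _ _ "\<lambda>t. aval q \<mu> n t (u ! i)"])
           (auto simp: le measure_nonneg lim[OF ui i(2)])
      then show False using nl by simp
    qed
  next
    fix u assume "u \<in> {replicate k s | k. True}"
    then obtain k where uk: "u = replicate k s" by auto
    have u: "u \<in> words q" using uk s by (auto simp: words_def)
    let ?I = "{..<k} \<times> {x. x < q \<and> x \<noteq> s}"
    let ?A = "\<lambda>t (p :: nat \<times> nat). pre q n t [snd p] (int (fst p))"
    have finI: "finite ?I" by auto
    have ge: "1 \<le> measure \<mu> (pre q n t u 0) + (\<Sum>p\<in>?I. measure \<mu> (?A t p))" for t
    proof -
      have cov: "configs q \<subseteq> pre q n t u 0 \<union> (\<Union>p\<in>?I. ?A t p)"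
      proof
        fix c assume c: "c \<in> configs q"
        have fc: "(global_map q n ^^ t) c \<in> configs q" by (rule funpow_configs[OF v c])
        show "c \<in> pre q n t u 0 \<union> (\<Union>p\<in>?I. ?A t p)"
        proof (cases "c \<in> pre q n t u 0")
          case False
          then obtain i where i: "i < k" "(global_map q n ^^ t) c (int i) \<noteq> s"
            using c fc uk by (auto simp: pre_def cyl_def)
          let ?x = "(global_map q n ^^ t) c (int i)"
          have "?x < q" using fc by (auto simp: configs_def)
          then have "(i, ?x) \<in> ?I" using i by auto
          moreover have "c \<in> ?A t (i, ?x)" using c fc by (auto simp: pre_def cyl_def)
          ultimately show ?thesis by blast
        qed simp
      qed
      have Asets: "?A t ` ?I \<subseteq> sets \<mu>" using pre_single_measure(1)[OF si v q] by auto
      have "1 = measure \<mu> (configs q)" using prob_space space_mu[OF si] by simp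
      also have "\<dots> \<le> measure \<mu> (pre q n t u 0 \<union> (\<Union>p\<in>?I. ?A t p))"
        using cov pre_sets[OF si v q u] Asets finI by (intro finite_measure_mono) auto
      also have "\<dots> \<le> measure \<mu> (pre q n t u 0) + measure \<mu> (\<Union>p\<in>?I. ?A t p)"
        using pre_sets[OF si v q u] Asets finI by (intro measure_Un_le) auto
      also have "\<dots> \<le> measure \<mu> (pre q n t u 0) + (\<Sum>p\<in>?I. measure \<mu> (?A t p))"
        using finite_measure_subadditive_finite[OF finI Asets] by simp
      finally show ?thesis .
    qed
    have sum0: "(\<lambda>t. \<Sum>p\<in>?I. measure \<mu> (?A t p)) \<longlonglongrightarrow> 0"
    proof (rule tendsto_null_sum)
      fix p assume "p \<in> ?I"
      then show "(\<lambda>t. measure \<mu> (?A t p)) \<longlonglongrightarrow> 0"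
        using lim[of "snd p"] aval_z[OF si v q] by auto
    qed
    show "u \<in> L_mu q \<mu> n" unfolding L_mu_pre[OF si]
    proof (intro CollectI conjI notI u)
      assume "(\<lambda>t. measure \<mu> (pre q n t u 0)) \<longlonglongrightarrow> 0"
      then have "(\<lambda>t. measure \<mu> (pre q n t u 0) + (\<Sum>p\<in>?I. measure \<mu> (?A t p))) \<longlonglongrightarrow> 0 + 0"
        using sum0 by (rule tendsto_add)
      then have "1 \<le> (0::real)" using ge by (intro LIMSEQ_le_const) auto
      then show False by simp
    qed
  qed
  then show "mu_nilpotent q \<mu> n" using s by (auto simp: mu_nilpotent_def)
qed

definition gfun :: "nat \<Rightarrow> nat \<Rightarrow> nat" where
  "gfun N v = (if fst (prod_decode v) mod 2 = 0
      then (N * (fst (prod_decode v) div 2)) div (snd (prod_decode v) + 1) else 0)"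

lemma int_decode_even: "even a \<Longrightarrow> int_decode a = int (a div 2)"
  by (simp add: int_decode_def sum_decode_def)

lemma int_decode_odd: "odd a \<Longrightarrow> int_decode a < 0"
  by (simp add: int_decode_def sum_decode_def)

lemma less_div_aux0: "y * d + m = (x::nat) \<Longrightarrow> m < d \<Longrightarrow> x < (y + 1) * d"
  by (simp add: algebra_simps)

lemma less_div_aux: "0 < (d::nat) \<Longrightarrow> x < (x div d + 1) * d"
  by (rule less_div_aux0[OF div_mult_mod_eq]) simp

lemma gfun_approx:
  fixes m :: real
  assumes N: "0 < N" and m0: "0 \<le> m" and app: "\<bar>m - rat_dec v\<bar> \<le> 1 / real N"
  shows "\<bar>real (gfun N v) - real N * m\<bar> \<le> 2"
proof -
  obtain a b where ab: "prod_decode v = (a, b)" by fastforce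
  have rd: "rat_dec v = real_of_int (int_decode a) / real (b + 1)" by (simp add: rat_dec_def ab)
  have Nm: "\<bar>real N * m - real N * rat_dec v\<bar> \<le> 1"
  proof -
    have "\<bar>real N * m - real N * rat_dec v\<bar> = real N * \<bar>m - rat_dec v\<bar>"
      by (simp add: abs_mult right_diff_distrib[symmetric])
    also have "\<dots> \<le> real N * (1 / real N)" using app N by (intro mult_left_mono) auto
    also have "\<dots> = 1" using N by simp
    finally show ?thesis .
  qed
  show ?thesis
  proof (cases "even a")
    case True
    let ?g = "N * (a div 2) div (b + 1)"
    have g: "gfun N v = ?g" using True ab by (simp add: gfun_def)
    have lo: "?g * (b + 1) \<le> N * (a div 2)" by (rule div_times_less_eq_dividend)
    have hi: "N * (a div 2) < (?g + 1) * (b + 1)"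
      by (rule less_div_aux) simp
    have r: "real N * rat_dec v = real (N * (a div 2)) / real (b + 1)"
      using True by (simp add: rd int_decode_even)
    have bpos: "0 < real (b + 1)" by simp
    have lo_r: "real ?g * real (b + 1) \<le> real (N * (a div 2))"
    proof -
      have "real (?g * (b + 1)) \<le> real (N * (a div 2))" using lo by (simp only: of_nat_le_iff)
      then show ?thesis by (simp only: of_nat_mult)
    qed
    have hi_r: "real (N * (a div 2)) < (real ?g + 1) * real (b + 1)"
    proof -
      have "real (N * (a div 2)) < real ((?g + 1) * (b + 1))" using hi by (simp only: of_nat_less_iff)
      then show ?thesis by (simp only: of_nat_mult of_nat_add of_nat_1)
    qed
    have lo': "real ?g \<le> real N * rat_dec v"
      unfolding r using lo_r by (simp only: pos_le_divide_eq[OF bpos])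
    have hi': "real N * rat_dec v < real ?g + 1"
      unfolding r using hi_r by (simp only: pos_divide_less_eq[OF bpos])
    show ?thesis unfolding g using lo' hi' Nm by linarith
  next
    case False
    have "a mod 2 \<noteq> 0" using False by presburger
    then have g: "gfun N v = 0" using ab by (simp add: gfun_def)
    have "rat_dec v < 0" using int_decode_odd[OF False] by (simp add: rd divide_neg_pos)
    then have "real N * rat_dec v < 0" using N by (simp add: mult_pos_neg)
    moreover have nm0: "0 \<le> real N * m" using m0 by simp
    moreover have "real N * m \<le> real N * rat_dec v + 1" using Nm by (simp add: abs_le_iff)
    ultimately show ?thesis unfolding g by simp
  qed
qed

lemma c1: assumes k: "(k::real) > 0" and Q: "Q > 0" and N: "N = 8*k*Q" and a1: "N*a \<le> S + 2*Q" and a2: "2*k*S \<le> N"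
  shows "k*a < 1"
proof -
  have h1: "2*k*(N*a) \<le> 2*k*(S + 2*Q)" using a1 k by (intro mult_left_mono) auto
  have h2: "2*k*(N*a) = (4*k*Q) * (4*k*a)" using N by (simp add: algebra_simps)
  have h3: "2*k*(S+2*Q) \<le> (4*k*Q)*3" using a2 N by (simp add: algebra_simps)
  have "(4*k*Q) * (4*k*a) \<le> (4*k*Q)*3" using h1 h2 h3 by linarith
  then have "4*k*a \<le> 3" using k Q by (simp add: mult_le_cancel_left_pos mult_ac)
  then show ?thesis by linarith
qed
lemma c2: assumes k: "(k::real) > 0" and Q: "Q > 0" and N: "N = 8*k*Q" and a1: "S \<le> N*a + 2*Q" and a2: "4*k*a \<le> 1"
  shows "2*k*S \<le> N"
proof -
  have h1: "2*k*S \<le> 2*k*(N*a + 2*Q)" using a1 k by (intro mult_left_mono) auto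
  have h2: "2*k*(N*a + 2*Q) = (4*k*Q) * (4*k*a) + 4*k*Q" using N by (simp add: algebra_simps)
  have h3: "(4*k*Q) * (4*k*a) \<le> (4*k*Q) * 1" using a2 k Q by (intro mult_left_mono) auto
  show ?thesis using h1 h2 h3 N by linarith
qed

definition Nt :: "nat \<Rightarrow> nat \<Rightarrow> nat \<Rightarrow> nat \<Rightarrow> nat" where
  "Nt q n t K = 8 * (K + 1) * q ^ (2 * fst (prod_decode n) * t + 1)"

definition vv :: "nat \<Rightarrow> (nat \<Rightarrow> nat) \<Rightarrow> nat \<Rightarrow> nat \<Rightarrow> nat \<Rightarrow> nat \<Rightarrow> nat" where
  "vv q f n t K j = f (prod_encode (lc q (2 * fst (prod_decode n) * t + 1) j, prod_encode (2, Nt q n t K - 1)))"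

definition Ssum :: "nat \<Rightarrow> (nat \<Rightarrow> nat) \<Rightarrow> nat \<Rightarrow> nat \<Rightarrow> nat \<Rightarrow> nat \<Rightarrow> nat" where
  "Ssum q f n t x K = (\<Sum>j<q ^ (2 * fst (prod_decode n) * t + 1).
      if itn q n t j = x then gfun (Nt q n t K) (vv q f n t K j) else 0)"

definition Cp :: "nat \<Rightarrow> (nat \<Rightarrow> nat) \<Rightarrow> nat \<Rightarrow> nat \<Rightarrow> nat \<Rightarrow> nat \<Rightarrow> bool" where
  "Cp q f n t x K \<longleftrightarrow> 2 * (K + 1) * Ssum q f n t x K \<le> Nt q n t K"

lemma rat_dec_inv: "0 < N \<Longrightarrow> rat_dec (prod_encode (2, N - 1)) = 1 / real N"
proof -
  assume N: "0 < N"
  have "int_decode 2 = 1" by (simp add: int_decode_def sum_decode_def)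
  then show ?thesis using N by (simp add: rat_dec_def)
qed

lemma Ssum_approx:
  assumes si: "shift_invariant_prob q \<mu>" and v: "valid_ca q n" and q: "0 < q"
    and hf: "\<forall>n m. list_decode n \<in> words q \<longrightarrow> rat_dec m > 0 \<longrightarrow>
        \<bar>measure \<mu> (cyl q (list_decode n) 0) - rat_dec (f (prod_encode (n, m)))\<bar> \<le> rat_dec m"
  shows "\<bar>real (Ssum q f n t x K) - real (Nt q n t K) * aval q \<mu> n t x\<bar> \<le> 2 * real q ^ (2 * ca_radius n * t + 1)"
proof -
  let ?L = "2 * ca_radius n * t + 1"
  let ?N = "Nt q n t K"
  let ?mu = "\<lambda>j. measure \<mu> (cyl q (wordof q ?L j) 0)"
  let ?g = "\<lambda>j. gfun ?N (vv q f n t K j)"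
  have Npos: "0 < ?N" using q by (simp add: Nt_def)
  have J: "Jset q n t x = {j \<in> {..<q ^ ?L}. itn q n t j = x}" by (auto simp: Jset_def)
  have S: "Ssum q f n t x K = (\<Sum>j\<in>Jset q n t x. ?g j)"
    unfolding Ssum_def J by (subst sum.inter_filter) (auto simp: ca_radius_def)
  have A: "aval q \<mu> n t x = (\<Sum>j\<in>Jset q n t x. ?mu j)"
    unfolding aval_def by (rule pre_single_measure(2)[OF si v q])
  have each: "\<bar>real (?g j) - real ?N * ?mu j\<bar> \<le> 2" for j
  proof (rule gfun_approx[OF Npos measure_nonneg])
    have "list_decode (lc q ?L j) = wordof q ?L j" by (simp add: lc_eq)
    moreover have "wordof q ?L j \<in> words q" by (rule wordof_words[OF q])
    moreover have "rat_dec (prod_encode (2, ?N - 1)) = 1 / real ?N" by (rule rat_dec_inv[OF Npos])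
    ultimately show "\<bar>?mu j - rat_dec (vv q f n t K j)\<bar> \<le> 1 / real ?N"
      using hf[rule_format, of "lc q ?L j" "prod_encode (2, ?N - 1)"] Npos
      by (simp add: vv_def ca_radius_def)
  qed
  have "\<bar>real (Ssum q f n t x K) - real ?N * aval q \<mu> n t x\<bar> = \<bar>\<Sum>j\<in>Jset q n t x. (real (?g j) - real ?N * ?mu j)\<bar>"
    unfolding S A by (simp add: sum_subtractf sum_distrib_left)
  also have "\<dots> \<le> (\<Sum>j\<in>Jset q n t x. \<bar>real (?g j) - real ?N * ?mu j\<bar>)" by (rule sum_abs)
  also have "\<dots> \<le> (\<Sum>j\<in>Jset q n t x. 2)" by (intro sum_mono each)
  also have "\<dots> = 2 * real (card (Jset q n t x))" by simp
  also have "\<dots> \<le> 2 * real q ^ ?L"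
  proof -
    have "card (Jset q n t x) \<le> card {..<q ^ ?L}" unfolding J by (intro card_mono) auto
    then have "real (card (Jset q n t x)) \<le> real (q ^ ?L)" by (simp only: card_lessThan of_nat_le_iff)
    then have "real (card (Jset q n t x)) \<le> real q ^ ?L" by (simp only: of_nat_power)
    then show ?thesis by linarith
  qed
  finally show ?thesis .
qed

lemma Cp_imp:
  assumes si: "shift_invariant_prob q \<mu>" and v: "valid_ca q n" and q: "0 < q"
    and hf: "\<forall>n m. list_decode n \<in> words q \<longrightarrow> rat_dec m > 0 \<longrightarrow>
        \<bar>measure \<mu> (cyl q (list_decode n) 0) - rat_dec (f (prod_encode (n, m)))\<bar> \<le> rat_dec m"
    and C: "Cp q f n t x K"
  shows "aval q \<mu> n t x < 1 / real (K + 1)"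
proof -
  let ?Q = "real q ^ (2 * ca_radius n * t + 1)"
  have ap: "\<bar>real (Ssum q f n t x K) - real (Nt q n t K) * aval q \<mu> n t x\<bar> \<le> 2 * ?Q"
    by (rule Ssum_approx[OF si v q hf])
  have N: "real (Nt q n t K) = 8 * real (K + 1) * ?Q" by (simp add: Nt_def ca_radius_def)
  have "real (K + 1) * aval q \<mu> n t x < 1"
  proof (rule c1[of "real (K + 1)" ?Q "real (Nt q n t K)" _ "real (Ssum q f n t x K)"])
    show "0 < ?Q" using q by simp
    show "real (Nt q n t K) * aval q \<mu> n t x \<le> real (Ssum q f n t x K) + 2 * ?Q" using ap by linarith
    have "2 * (K + 1) * Ssum q f n t x K \<le> Nt q n t K" using C by (simp add: Cp_def)
    then have "real (2 * (K + 1) * Ssum q f n t x K) \<le> real (Nt q n t K)" by (simp only: of_nat_le_iff)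
    then show "2 * real (K + 1) * real (Ssum q f n t x K) \<le> real (Nt q n t K)" by (simp add: algebra_simps)
  qed (use N in auto)
  then show ?thesis by (simp add: field_simps)
qed

lemma imp_Cp:
  assumes si: "shift_invariant_prob q \<mu>" and v: "valid_ca q n" and q: "0 < q"
    and hf: "\<forall>n m. list_decode n \<in> words q \<longrightarrow> rat_dec m > 0 \<longrightarrow>
        \<bar>measure \<mu> (cyl q (list_decode n) 0) - rat_dec (f (prod_encode (n, m)))\<bar> \<le> rat_dec m"
    and a: "aval q \<mu> n t x \<le> 1 / (4 * real (K + 1))"
  shows "Cp q f n t x K"
proof -
  let ?Q = "real q ^ (2 * ca_radius n * t + 1)"
  have ap: "\<bar>real (Ssum q f n t x K) - real (Nt q n t K) * aval q \<mu> n t x\<bar> \<le> 2 * ?Q"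
    by (rule Ssum_approx[OF si v q hf])
  have N: "real (Nt q n t K) = 8 * real (K + 1) * ?Q" by (simp add: Nt_def ca_radius_def)
  have "2 * real (K + 1) * real (Ssum q f n t x K) \<le> real (Nt q n t K)"
  proof (rule c2[of "real (K + 1)" ?Q "real (Nt q n t K)" _ "aval q \<mu> n t x"])
    show "0 < ?Q" using q by simp
    show "real (Ssum q f n t x K) \<le> real (Nt q n t K) * aval q \<mu> n t x + 2 * ?Q" using ap by linarith
    show "4 * real (K + 1) * aval q \<mu> n t x \<le> 1" using a by (simp add: field_simps)
  qed (use N in auto)
  then have "real (2 * (K + 1) * Ssum q f n t x K) \<le> real (Nt q n t K)" by (simp add: algebra_simps)
  then show ?thesis unfolding Cp_def by (simp only: of_nat_le_iff)
qed

definition Rel :: "nat \<Rightarrow> (nat \<Rightarrow> nat) \<Rightarrow> nat \<Rightarrow> nat \<Rightarrow> nat \<Rightarrow> nat \<Rightarrow> bool" where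
  "Rel q f n K b c \<longleftrightarrow>
    llen (snd (prod_decode n)) = q ^ (2 * fst (prod_decode n) + 1) \<and>
    (snd (prod_decode (snd (prod_decode c))) < llen (snd (prod_decode n)) \<longrightarrow>
       lnth (snd (prod_decode n)) (snd (prod_decode (snd (prod_decode c)))) < q) \<and>
    fst (prod_decode b) < q \<and>
    (snd (prod_decode b) \<le> fst (prod_decode c) \<and> fst (prod_decode (snd (prod_decode c))) < q \<and>
       fst (prod_decode (snd (prod_decode c))) \<noteq> fst (prod_decode b) \<longrightarrow>
       Cp q f n (fst (prod_decode c)) (fst (prod_decode (snd (prod_decode c)))) K)"

lemma valid_iff: "valid_ca q n \<longleftrightarrow> llen (snd (prod_decode n)) = q ^ (2 * fst (prod_decode n) + 1) \<and>
   (\<forall>i. i < llen (snd (prod_decode n)) \<longrightarrow> lnth (snd (prod_decode n)) i < q)"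
  unfolding valid_ca_def words_def ca_table_def ca_radius_def llen_eq
  by (auto simp: lnth_eq all_set_conv_all_nth)

lemma pigeon:
  fixes P :: "nat \<Rightarrow> nat \<Rightarrow> bool"
  assumes ex: "\<And>K. \<exists>s<(q::nat). P K s" and mono: "\<And>K K' s. K \<le> K' \<Longrightarrow> P K' s \<Longrightarrow> P K s"
  shows "\<exists>s<q. \<forall>K. P K s"
proof (rule ccontr)
  assume "\<not> ?thesis"
  then have "\<forall>s. \<exists>K. s < q \<longrightarrow> \<not> P K s" by auto
  then obtain Kf where Kf: "\<And>s. s < q \<Longrightarrow> \<not> P (Kf s) s" by metis
  obtain s where s: "s < q" "P (\<Sum>s<q. Kf s) s" using ex by blast
  have "Kf s \<le> (\<Sum>s<q. Kf s)" using s(1) by (intro member_le_sum) auto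
  then have "P (Kf s) s" using s(2) mono by blast
  then show False using Kf s(1) by blast
qed

lemma main_equiv:
  assumes si: "shift_invariant_prob q \<mu>" and q: "0 < q"
    and hf: "\<forall>n m. list_decode n \<in> words q \<longrightarrow> rat_dec m > 0 \<longrightarrow>
        \<bar>measure \<mu> (cyl q (list_decode n) 0) - rat_dec (f (prod_encode (n, m)))\<bar> \<le> rat_dec m"
  shows "(valid_ca q n \<and> mu_nilpotent q \<mu> n) \<longleftrightarrow> (\<forall>K. \<exists>b. \<forall>c. Rel q f n K b c)"
proof
  assume "valid_ca q n \<and> mu_nilpotent q \<mu> n"
  then have v: "valid_ca q n" and nil: "mu_nilpotent q \<mu> n" by auto
  obtain s where s: "s < q" and lim: "\<And>x. x < q \<Longrightarrow> x \<noteq> s \<Longrightarrow> (\<lambda>t. aval q \<mu> n t x) \<longlonglongrightarrow> 0"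
    using nil unfolding nil_iff[OF si v q] by auto
  show "\<forall>K. \<exists>b. \<forall>c. Rel q f n K b c"
  proof
    fix K
    let ?e = "1 / (4 * real (K + 1))"
    have epos: "0 < ?e" by simp
    have "\<forall>x. \<exists>T. x < q \<and> x \<noteq> s \<longrightarrow> (\<forall>t\<ge>T. aval q \<mu> n t x \<le> ?e)"
    proof
      fix x
      show "\<exists>T. x < q \<and> x \<noteq> s \<longrightarrow> (\<forall>t\<ge>T. aval q \<mu> n t x \<le> ?e)"
      proof (cases "x < q \<and> x \<noteq> s")
        case True
        then obtain T where "\<forall>t\<ge>T. norm (aval q \<mu> n t x - 0) < ?e" using LIMSEQ_D[OF lim epos] by blast
        then show ?thesis by (intro exI[of _ T]) auto
      qed auto
    qed
    then obtain Tf where Tf: "\<And>x t. x < q \<Longrightarrow> x \<noteq> s \<Longrightarrow> Tf x \<le> t \<Longrightarrow> aval q \<mu> n t x \<le> ?e" by metis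
    let ?T = "\<Sum>x<q. Tf x"
    have vi: "llen (snd (prod_decode n)) = q ^ (2 * fst (prod_decode n) + 1)"
      "\<And>i. i < llen (snd (prod_decode n)) \<Longrightarrow> lnth (snd (prod_decode n)) i < q"
      using v unfolding valid_iff by auto
    show "\<exists>b. \<forall>c. Rel q f n K b c"
    proof (intro exI[of _ "prod_encode (s, ?T)"] allI)
      fix c
      let ?t = "fst (prod_decode c)" and ?x = "fst (prod_decode (snd (prod_decode c)))"
      have "?T \<le> ?t \<Longrightarrow> ?x < q \<Longrightarrow> ?x \<noteq> s \<Longrightarrow> Cp q f n ?t ?x K"
      proof -
        assume a: "?T \<le> ?t" "?x < q" "?x \<noteq> s"
        have "Tf ?x \<le> ?T" using a(2) by (intro member_le_sum) auto
        then show "Cp q f n ?t ?x K" using Tf[OF a(2,3)] a(1) by (intro imp_Cp[OF si v q hf]) auto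
      qed
      then show "Rel q f n K (prod_encode (s, ?T)) c" unfolding Rel_def using vi s by auto
    qed
  qed
next
  assume R: "\<forall>K. \<exists>b. \<forall>c. Rel q f n K b c"
  obtain b0 where b0: "\<And>c. Rel q f n 0 b0 c" using R by blast
  have v: "valid_ca q n" unfolding valid_iff
  proof (intro conjI allI impI)
    show "llen (snd (prod_decode n)) = q ^ (2 * fst (prod_decode n) + 1)" using b0[of 0] by (simp add: Rel_def)
    fix i assume "i < llen (snd (prod_decode n))"
    then show "lnth (snd (prod_decode n)) i < q" using b0[of "prod_encode (0, prod_encode (0, i))"] by (simp add: Rel_def)
  qed
  let ?P = "\<lambda>K s. \<exists>T. \<forall>t\<ge>T. \<forall>x<q. x \<noteq> s \<longrightarrow> aval q \<mu> n t x < 1 / real (K + 1)"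
  have exP: "\<exists>s<q. ?P K s" for K
  proof -
    obtain b where b: "\<And>c. Rel q f n K b c" using R by blast
    have "fst (prod_decode b) < q" using b[of 0] by (simp add: Rel_def)
    moreover have "?P K (fst (prod_decode b))"
    proof (intro exI[of _ "snd (prod_decode b)"] allI impI)
      fix t x assume a: "snd (prod_decode b) \<le> t" "x < q" "x \<noteq> fst (prod_decode b)"
      have "Cp q f n t x K" using b[of "prod_encode (t, prod_encode (x, 0))"] a by (simp add: Rel_def)
      then show "aval q \<mu> n t x < 1 / real (K + 1)" by (rule Cp_imp[OF si v q hf])
    qed
    ultimately show ?thesis by blast
  qed
  have monoP: "?P K s" if "K \<le> K'" "?P K' s" for K K' s
  proof -
    have "1 / real (K' + 1) \<le> 1 / real (K + 1)" using that(1) by (intro divide_left_mono) auto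
    then show ?thesis using that(2) by (meson less_le_trans)
  qed
  have "\<exists>s<q. \<forall>K. ?P K s"
  proof (rule pigeon)
    show "\<exists>s<q. ?P K s" for K by (rule exP)
    show "?P K s" if "K \<le> K'" "?P K' s" for K K' s using that by (rule monoP)
  qed
  then obtain s where s: "s < q" and Ps: "\<And>K. ?P K s" by blast
  have "\<forall>x<q. x \<noteq> s \<longrightarrow> (\<lambda>t. aval q \<mu> n t x) \<longlonglongrightarrow> 0"
  proof (intro allI impI)
    fix x assume x: "x < q" "x \<noteq> s"
    show "(\<lambda>t. aval q \<mu> n t x) \<longlonglongrightarrow> 0"
    proof (rule LIMSEQ_I)
      fix r :: real assume r: "0 < r"
      obtain m where m: "0 < m" "inverse (real m) < r" using ex_inverse_of_nat_less[OF r] by blast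
      obtain T where T: "\<And>t. T \<le> t \<Longrightarrow> aval q \<mu> n t x < 1 / real (m - 1 + 1)" using Ps[of "m - 1"] x by blast
      have "1 / real (m - 1 + 1) = inverse (real m)" using m(1) by (simp add: inverse_eq_divide)
      then have "\<forall>t\<ge>T. aval q \<mu> n t x < r" using T m(2) by (metis less_trans)
      moreover have "0 \<le> aval q \<mu> n t x" for t by (simp add: aval_def)
      ultimately show "\<exists>no. \<forall>t\<ge>no. norm (aval q \<mu> n t x - 0) < r" by (intro exI[of _ T]) auto
    qed
  qed
  then have "mu_nilpotent q \<mu> n" unfolding nil_iff[OF si v q] using s by auto
  then show "valid_ca q n \<and> mu_nilpotent q \<mu> n" using v by simp
qed

lemma cmp_comp4: "cmp 4 g \<Longrightarrow> cmp k f1 \<Longrightarrow> cmp k f2 \<Longrightarrow> cmp k f3 \<Longrightarrow> cmp k f4 \<Longrightarrow>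
    cmp k (\<lambda>xs. g [f1 xs, f2 xs, f3 xs, f4 xs])"
  using cmp_comp[of 4 g "[f1,f2,f3,f4]" k] by (simp add: numeral_eq_Suc)

lemma len3: "length ys = 3 \<Longrightarrow> ys = [ys!0, ys!1, ys!2]"
  by (cases ys; cases "tl ys"; cases "tl (tl ys)") (auto simp: numeral_eq_Suc)

lemma len4: "length ys = 4 \<Longrightarrow> ys = [ys!0, ys!1, ys!2, ys!3]"
  by (cases ys; cases "tl ys"; cases "tl (tl ys)"; cases "tl (tl (tl ys))") (auto simp: numeral_eq_Suc)

lemma len2: "length ys = 2 \<Longrightarrow> ys = [ys!0, ys!1]"
  by (cases ys; cases "tl ys") (auto simp: numeral_eq_Suc)

lemma lift3:
  assumes "cmp 3 (\<lambda>ys. F (ys!0) (ys!1) (ys!2))" "cmp k A" "cmp k B" "cmp k C"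
  shows "cmp k (\<lambda>xs. F (A xs) (B xs) (C xs))"
  using cmp_comp3[OF assms] by simp

lemma lift2:
  assumes "cmp 2 (\<lambda>ys. F (ys!0) (ys!1))" "cmp k A" "cmp k B"
  shows "cmp k (\<lambda>xs. F (A xs) (B xs))"
  using cmp_comp2[OF assms] by simp

lemma lift4:
  assumes "cmp 4 (\<lambda>ys. F (ys!0) (ys!1) (ys!2) (ys!3))" "cmp k A" "cmp k B" "cmp k C" "cmp k D"
  shows "cmp k (\<lambda>xs. F (A xs) (B xs) (C xs) (D xs))"
  using cmp_comp4[OF assms] by simp

lemma cmp_stepnum0: "cmp 3 (\<lambda>ys. stepnum q (ys!0) (ys!1) (ys!2))"
  unfolding stepnum_def
proof (rule cmp_sum'[where H="\<lambda>ws. lnth (snd (prod_decode (ws!1))) ((ws!3 div q ^ (ws!0)) mod q ^ (2 * fst (prod_decode (ws!1)) + 1)) * q ^ (ws!0)"])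
  show "cmp (Suc 3) (\<lambda>ws. lnth (snd (prod_decode (ws!1))) ((ws!3 div q ^ (ws!0)) mod q ^ (2 * fst (prod_decode (ws!1)) + 1)) * q ^ (ws!0))"
    by (intro cmp_mult cmp_lnth cmp_snd cmp_fst cmp_mod cmp_div cmp_pow cmp_add cmp_const cmp_proj) auto
  show "cmp 3 (\<lambda>ys. ys!1)" by (rule cmp_proj) simp
  fix ys :: "nat list" assume "length ys = Suc 3"
  then show "lnth (snd (prod_decode (ys!1))) ((ys!3 div q ^ (ys!0)) mod q ^ (2 * fst (prod_decode (ys!1)) + 1)) * q ^ (ys!0)
    = (\<lambda>p ys. lnth (snd (prod_decode (ys!0))) ((ys!2 div q ^ p) mod q ^ (2 * fst (prod_decode (ys!0)) + 1)) * q ^ p) (hd ys) (tl ys)"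
    by (cases ys) (auto simp: nth_tl hd_conv_nth)
qed

lemma cmp_stepnum: "cmp k A \<Longrightarrow> cmp k B \<Longrightarrow> cmp k C \<Longrightarrow> cmp k (\<lambda>xs. stepnum q (A xs) (B xs) (C xs))"
  by (rule lift3[OF cmp_stepnum0])

lemma cmp_itn0: "cmp 3 (\<lambda>ys. itn q (ys!0) (ys!1) (ys!2))"
  unfolding itn_def
proof (rule cmp_rec'[where f="\<lambda>xs. xs!2" and e="\<lambda>xs. xs!1"
    and G="\<lambda>s acc xs. stepnum q (xs!0) (2 * fst (prod_decode (xs!0)) * (xs!1 - Suc s) + 1) acc"
    and H="\<lambda>ws. stepnum q (ws!2) (2 * fst (prod_decode (ws!2)) * (ws!3 - Suc (ws!0)) + 1) (ws!1)"])
  show "cmp 3 (\<lambda>xs. xs!2)" "cmp 3 (\<lambda>xs. xs!1)" by (auto intro: cmp_proj)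
  show "cmp (Suc (Suc 3)) (\<lambda>ws. stepnum q (ws!2) (2 * fst (prod_decode (ws!2)) * (ws!3 - Suc (ws!0)) + 1) (ws!1))"
    by (intro cmp_stepnum cmp_add cmp_mult cmp_minus cmp_Suc cmp_fst cmp_const cmp_proj) auto
qed (auto simp: nth_drop)

lemma cmp_itn: "cmp k A \<Longrightarrow> cmp k B \<Longrightarrow> cmp k C \<Longrightarrow> cmp k (\<lambda>xs. itn q (A xs) (B xs) (C xs))"
  by (rule lift3[OF cmp_itn0])

lemma cmp_lc0: "cmp 2 (\<lambda>ys. lc q (ys!0) (ys!1))"
  unfolding lc_def
proof (rule cmp_rec'[where f="\<lambda>xs. 0" and e="\<lambda>xs. xs!0"
    and G="\<lambda>p acc xs. Suc (prod_encode (xs!1 div q ^ p mod q, acc))"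
    and H="\<lambda>ws. Suc (prod_encode (ws!3 div q ^ (ws!0) mod q, ws!1))"])
  show "cmp 2 (\<lambda>xs. 0)" "cmp 2 (\<lambda>xs. xs!0)" by (auto intro: cmp_proj cmp_zero)
  show "cmp (Suc (Suc 2)) (\<lambda>ws. Suc (prod_encode (ws!3 div q ^ (ws!0) mod q, ws!1)))"
    by (intro cmp_Suc cmp_pe cmp_mod cmp_div cmp_pow cmp_const cmp_proj) auto
qed (auto simp: nth_drop)

lemma cmp_lc: "cmp k A \<Longrightarrow> cmp k B \<Longrightarrow> cmp k (\<lambda>xs. lc q (A xs) (B xs))"
  by (rule lift2[OF cmp_lc0])

lemma cmp_gfun: "cmp k A \<Longrightarrow> cmp k B \<Longrightarrow> cmp k (\<lambda>xs. gfun (A xs) (B xs))"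
  unfolding gfun_def
  by (intro cmp_if cmpP_eq cmp_mod cmp_div cmp_mult cmp_add cmp_fst cmp_snd cmp_const)

lemma cmp_Nt: "cmp k A \<Longrightarrow> cmp k B \<Longrightarrow> cmp k C \<Longrightarrow> cmp k (\<lambda>xs. Nt q (A xs) (B xs) (C xs))"
  unfolding Nt_def by (intro cmp_mult cmp_add cmp_pow cmp_fst cmp_const)

lemma cmp_vv:
  assumes f: "computable f"
  shows "cmp k A \<Longrightarrow> cmp k B \<Longrightarrow> cmp k C \<Longrightarrow> cmp k D \<Longrightarrow> cmp k (\<lambda>xs. vv q f (A xs) (B xs) (C xs) (D xs))"
  unfolding vv_def
  by (intro cmp_ext_fun[OF f] cmp_pe cmp_lc cmp_add cmp_mult cmp_fst cmp_const cmp_minus cmp_Nt)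

lemma cmp_Ssum0:
  assumes f: "computable f"
  shows "cmp 4 (\<lambda>ys. Ssum q f (ys!0) (ys!1) (ys!2) (ys!3))"
  unfolding Ssum_def
proof (rule cmp_sum'[where H="\<lambda>ws. if itn q (ws!1) (ws!2) (ws!0) = ws!3
       then gfun (Nt q (ws!1) (ws!2) (ws!4)) (vv q f (ws!1) (ws!2) (ws!4) (ws!0)) else 0"])
  show "cmp (Suc 4) (\<lambda>ws. if itn q (ws!1) (ws!2) (ws!0) = ws!3
       then gfun (Nt q (ws!1) (ws!2) (ws!4)) (vv q f (ws!1) (ws!2) (ws!4) (ws!0)) else 0)"
    by (intro cmp_if cmpP_eq cmp_itn cmp_gfun cmp_Nt cmp_vv[OF f] cmp_const cmp_proj) auto
  show "cmp 4 (\<lambda>ys. q ^ (2 * fst (prod_decode (ys!0)) * ys!1 + 1))"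
    by (intro cmp_pow cmp_add cmp_mult cmp_fst cmp_const cmp_proj) auto
  fix ys :: "nat list" assume "length ys = Suc 4"
  then show "(if itn q (ys!1) (ys!2) (ys!0) = ys!3
       then gfun (Nt q (ys!1) (ys!2) (ys!4)) (vv q f (ys!1) (ys!2) (ys!4) (ys!0)) else 0) =
     (\<lambda>j ys. if itn q (ys!0) (ys!1) j = ys!2 then gfun (Nt q (ys!0) (ys!1) (ys!3)) (vv q f (ys!0) (ys!1) (ys!3) j) else 0) (hd ys) (tl ys)"
    by (cases ys) (auto simp: nth_tl hd_conv_nth)
qed

lemma cmp_Ssum:
  assumes f: "computable f"
  shows "cmp k A \<Longrightarrow> cmp k B \<Longrightarrow> cmp k C \<Longrightarrow> cmp k D \<Longrightarrow> cmp k (\<lambda>xs. Ssum q f (A xs) (B xs) (C xs) (D xs))"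
  by (rule lift4[OF cmp_Ssum0[OF f]])

lemma cmpP_Cp:
  assumes f: "computable f"
  shows "cmp k A \<Longrightarrow> cmp k B \<Longrightarrow> cmp k C \<Longrightarrow> cmp k D \<Longrightarrow> cmpP k (\<lambda>xs. Cp q f (A xs) (B xs) (C xs) (D xs))"
  unfolding Cp_def by (intro cmpP_le cmp_mult cmp_add cmp_const cmp_Ssum[OF f] cmp_Nt)

lemma cmpP_Rel:
  assumes f: "computable f"
  shows "cmpP 4 (\<lambda>xs. Rel q f (xs!0) (xs!1) (xs!2) (xs!3))"
  unfolding Rel_def
  by (intro cmpP_and cmpP_imp cmpP_eq cmpP_less cmpP_le cmpP_not cmpP_Cp[OF f]
      cmp_llen cmp_lnth cmp_pow cmp_add cmp_mult cmp_fst cmp_snd cmp_const cmp_proj) auto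

lemma decidable_Rel: "computable f \<Longrightarrow> decidable4 (Rel q f)"
  by (rule decidable4I) (rule cmpP_Rel)

theorem proposition5:
  fixes q :: nat and \<mu> :: "(int \<Rightarrow> nat) measure"
  assumes "q \<ge> 1"
    and "shift_invariant_prob q \<mu>"
    and "computable_measure q \<mu>"
  shows "Pi3 {n. valid_ca q n \<and> mu_nilpotent q \<mu> n}"
proof -
  obtain f where f: "computable f" and hf: "\<forall>n m. list_decode n \<in> words q \<longrightarrow> rat_dec m > 0 \<longrightarrow>
        \<bar>measure \<mu> (cyl q (list_decode n) 0) - rat_dec (f (prod_encode (n, m)))\<bar> \<le> rat_dec m"
    using assms(3) unfolding computable_measure_def by blast
  have q: "0 < q" using assms(1) by simp
  show ?thesis unfolding Pi3_def
  proof (intro exI[of _ "Rel q f"] conjI allI)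
    show "decidable4 (Rel q f)" by (rule decidable_Rel[OF f])
    fix n
    show "n \<in> {n. valid_ca q n \<and> mu_nilpotent q \<mu> n} \<longleftrightarrow> (\<forall>a. \<exists>b. \<forall>c. Rel q f n a b c)"
      using main_equiv[OF assms(2) q hf, of n] by simp
  qed
qed

end
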